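(* Let $A \in \mathbb{R}^{m \times n}$ and $b \in \mathbb{R}^m$ be such that $\mathcal{P} = \{x \in \mathbb{R}^n : Ax \geq b\}$ is a polytope. Then the vertex-edge graph $G_\mathrm{vert}$ of $\mathcal{P}$ is the image of the lex-graph $G_\mathrm{lex}$ by the map $\phi : I \mapsto \pi(X^I)$, where $\pi$ sends a matrix in $\mathbb{R}^{n \times (1+m)}$ to its first column.
   Context: Let $\tilde b := [\,b \;\; -\mathrm{Id}_m\,] \in \mathbb{R}^{m \times (1+m)}$. For row vectors $\alpha,\beta \in \mathbb{R}^{1+m}$, $\alpha \leq_{\mathrm{lex}} \beta$ means $\alpha = \beta$ or $\alpha_k < \beta_k$ at the first index $k$ where they differ; for matrices with $1+m$ columns, $X \geq_{\mathrm{lex}} Y$ means $X_i \geq_{\mathrm{lex}} Y_i$ for every row $i$. For $I \subset [m]$, $A_I$, $\tilde b_I$ are the submatrices of rows indexed by $I$. A lex-feasible basis is a set $I \subset [m]$ with $\#I = n$, $A_I$ nonsingular, and $X^I := A_I^{-1}\tilde b_I$ satisfying $A X^I \geq_{\mathrm{lex}} \tilde b$. The lex-graph $G_\mathrm{lex}$ has the lex-feasible bases as vertices, with an edge between $I$ and $I'$ iff $\#(I \cap I') = n-1$. A face of $\mathcal{P}$ is a nonempty set of minimizers over $\mathcal{P}$ of some linear function $x \mapsto \langle c, x\rangle$; vertices and edges are faces of dimension 0 and 1; two vertices $v,w$ are adjacent if the segment $[v,w]$ is an edge. $G_\mathrm{vert}$ is the graph on the vertices of $\mathcal{P}$ with this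 adjacency. The image of a graph $(V,E)$ by $f$ is the graph with vertex set $f(V)$ and edges $\{(f(v),f(w)) : (v,w) \in E,\ f(v) \neq f(w)\}$. *)

theory Defs
  imports "Jordan_Normal_Form.Determinant" "Jordan_Normal_Form.DL_Submatrix"
begin

(* Column indices of matrices with 1+m columns are 0..m (0 = first column). *)

definition btilde :: "nat \<Rightarrow> real vec \<Rightarrow> real mat" where
  "btilde m b = mat m (1 + m) (\<lambda>(i,k). if k = 0 then b $ i else if k = i + 1 then -1 else 0)"

definition lex_le :: "real vec \<Rightarrow> real vec \<Rightarrow> bool" where
  "lex_le \<alpha> \<beta> \<longleftrightarrow> \<alpha> = \<beta> \<or>
     (\<exists>k < dim_vec \<alpha>. (\<forall>j<k. \<alpha> $ j = \<beta> $ j) \<and> \<alpha> $ k < \<beta> $ k)"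

definition mat_lex_ge :: "real mat \<Rightarrow> real mat \<Rightarrow> bool" where
  "mat_lex_ge X Y \<longleftrightarrow> (\<forall>i < dim_row X. lex_le (row Y i) (row X i))"

(* X^I := A_I^{-1} btilde_I *)
definition XI :: "real mat \<Rightarrow> real vec \<Rightarrow> nat set \<Rightarrow> real mat" where
  "XI A b I = (THE X. X \<in> carrier_mat (dim_col A) (1 + dim_row A) \<and>
       submatrix A I UNIV * X = submatrix (btilde (dim_row A) b) I UNIV)"

definition lex_feasible_basis :: "real mat \<Rightarrow> real vec \<Rightarrow> nat set \<Rightarrow> bool" where
  "lex_feasible_basis A b I \<longleftrightarrow> I \<subseteq> {..<dim_row A} \<and> card I = dim_col A \<and>
     det (submatrix A I UNIV) \<noteq> 0 \<and>
     mat_lex_ge (A * XI A b I) (btilde (dim_row A) b)"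

definition G_lex :: "real mat \<Rightarrow> real vec \<Rightarrow> nat set set \<times> (nat set \<times> nat set) set" where
  "G_lex A b = ({I. lex_feasible_basis A b I},
     {(I, I'). lex_feasible_basis A b I \<and> lex_feasible_basis A b I' \<and> card (I \<inter> I') = dim_col A - 1})"

definition graph_image :: "('a \<Rightarrow> 'b) \<Rightarrow> 'a set \<times> ('a \<times> 'a) set \<Rightarrow> 'b set \<times> ('b \<times> 'b) set" where
  "graph_image f G = (f ` fst G, {(f v, f w) | v w. (v, w) \<in> snd G \<and> f v \<noteq> f w})"

definition first_col :: "real mat \<Rightarrow> real vec" where
  "first_col X = col X 0"

definition polyhedron :: "real mat \<Rightarrow> real vec \<Rightarrow> real vec set" where
  "polyhedron A b = {x \<in> carrier_vec (dim_col A). \<forall>i < dim_row A. (A *\<^sub>v x) $ i \<ge> b $ i}"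

definition convex_hull_vec :: "nat \<Rightarrow> real vec set \<Rightarrow> real vec set" where
  "convex_hull_vec n S = {x. \<exists>F l. finite F \<and> F \<subseteq> S \<and> (\<forall>s\<in>F. l s \<ge> 0) \<and> sum l F = 1 \<and>
        x = finsum_vec TYPE(real) n (\<lambda>s. l s \<cdot>\<^sub>v s) F}"

definition is_polytope :: "nat \<Rightarrow> real vec set \<Rightarrow> bool" where
  "is_polytope n P \<longleftrightarrow> (\<exists>V. finite V \<and> V \<subseteq> carrier_vec n \<and> P = convex_hull_vec n V)"

definition is_face :: "nat \<Rightarrow> real vec set \<Rightarrow> real vec set \<Rightarrow> bool" where
  "is_face n P F \<longleftrightarrow> F \<noteq> {} \<and> (\<exists>c \<in> carrier_vec n.
      F = {x \<in> P. \<forall>y \<in> P. c \<bullet> x \<le> c \<bullet> y})"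

definition closed_segment_vec :: "real vec \<Rightarrow> real vec \<Rightarrow> real vec set" where
  "closed_segment_vec v w = {(1 - t) \<cdot>\<^sub>v v + t \<cdot>\<^sub>v w | t. 0 \<le> t \<and> t \<le> 1}"

definition is_vertex :: "nat \<Rightarrow> real vec set \<Rightarrow> real vec \<Rightarrow> bool" where
  "is_vertex n P v \<longleftrightarrow> is_face n P {v}"

definition adjacent :: "nat \<Rightarrow> real vec set \<Rightarrow> real vec \<Rightarrow> real vec \<Rightarrow> bool" where
  "adjacent n P v w \<longleftrightarrow> is_vertex n P v \<and> is_vertex n P w \<and> v \<noteq> w \<and>
      is_face n P (closed_segment_vec v w)"

definition G_vert :: "nat \<Rightarrow> real vec set \<Rightarrow> real vec set \<times> (real vec \<times> real vec) set" where
  "G_vert n P = ({v. is_vertex n P v}, {(v, w). adjacent n P v w})"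

end

theory Submission
  imports Defs
begin


definition lexnn :: "nat \<Rightarrow> (nat \<Rightarrow> real) \<Rightarrow> bool" where
  "lexnn M f \<longleftrightarrow> (\<forall>k<M. f k = 0) \<or> (\<exists>k<M. (\<forall>j<k. f j = 0) \<and> f k > 0)"

lemma lexnn_cong: "(\<And>k. k < M \<Longrightarrow> f k = g k) \<Longrightarrow> lexnn M f = lexnn M g"
  unfolding lexnn_def by (smt (verit) order.strict_trans)

lemma lexnn_zero: "lexnn M (\<lambda>k. 0)" unfolding lexnn_def by auto

lemma lexnn_add:
  assumes "lexnn M f" "lexnn M g" shows "lexnn M (\<lambda>k. f k + g k)"
proof -
  { assume "\<forall>k<M. f k = 0"
    then have ?thesis using assms(2) lexnn_cong[of M g "\<lambda>k. f k + g k"] by auto }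
  moreover
  { assume "\<forall>k<M. g k = 0"
    then have ?thesis using assms(1) lexnn_cong[of M f "\<lambda>k. f k + g k"] by auto }
  moreover
  { fix k1 k2 assume 1: "k1 < M" "\<forall>j<k1. f j = 0" "f k1 > 0"
      and 2: "k2 < M" "\<forall>j<k2. g j = 0" "g k2 > 0"
    have ?thesis
    proof (cases "k1 \<le> k2")
      case True
      then show ?thesis unfolding lexnn_def using 1 2
        by (intro disjI2 exI[of _ k1]) (auto simp: le_less)
    next
      case False
      then show ?thesis unfolding lexnn_def using 1 2
        by (intro disjI2 exI[of _ k2]) auto
    qed }
  ultimately show ?thesis using assms unfolding lexnn_def by blast
qed

lemma lexnn_scale:
  assumes "c \<ge> 0" "lexnn M f" shows "lexnn M (\<lambda>k. c * f k)"
proof (cases "c = 0")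
  case True then show ?thesis by (simp add: lexnn_zero)
next
  case False
  then have "c > 0" using assms by auto
  then show ?thesis using assms(2) unfolding lexnn_def by auto
qed

lemma lexnn_total: "lexnn M f \<or> lexnn M (\<lambda>k. - f k)"
proof (cases "\<forall>k<M. f k = 0")
  case True then show ?thesis unfolding lexnn_def by auto
next
  case False
  define k where "k = (LEAST k. k < M \<and> f k \<noteq> 0)"
  have k: "k < M" "f k \<noteq> 0" using LeastI_ex[of "\<lambda>k. k < M \<and> f k \<noteq> 0"] False unfolding k_def by auto
  have z: "\<forall>j<k. f j = 0" using not_less_Least[of _ "\<lambda>k. k < M \<and> f k \<noteq> 0"] k unfolding k_def
    by (meson order.strict_trans)
  show ?thesis
  proof (cases "f k > 0")
    case True then show ?thesis unfolding lexnn_def using k z by blast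
  next
    case False
    then have "- f k > 0" using k by auto
    then show ?thesis unfolding lexnn_def using k z by (intro disjI2) (auto intro!: exI[of _ k])
  qed
qed

lemma lexnn_first: "lexnn M f \<Longrightarrow> 0 < M \<Longrightarrow> f 0 \<ge> 0"
  unfolding lexnn_def by (metis less_eq_real_def neq0_conv)

lemma lexnn_min:
  assumes "finite B" "B \<noteq> {}"
  shows "\<exists>j\<in>B. \<forall>i\<in>B. lexnn M (\<lambda>k. r i k - r j k)"
  using assms
proof (induction B rule: finite_ne_induct)
  case (singleton x) then show ?case by (simp add: lexnn_zero)
next
  case (insert x F)
  then obtain j where j: "j \<in> F" "\<forall>i\<in>F. lexnn M (\<lambda>k. r i k - r j k)" by blast
  show ?case
  proof (cases "lexnn M (\<lambda>k. r j k - r x k)")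
    case True
    { fix i assume "i \<in> insert x F"
      then have "lexnn M (\<lambda>k. r i k - r x k)"
      proof
        assume "i = x" then show ?thesis by (simp add: lexnn_zero)
      next
        assume "i \<in> F"
        then have "lexnn M (\<lambda>k. (r i k - r j k) + (r j k - r x k))"
          using lexnn_add j True by blast
        then show ?thesis by simp
      qed }
    then show ?thesis by blast
  next
    case False
    then have "lexnn M (\<lambda>k. - (r j k - r x k))" using lexnn_total by blast
    then have "lexnn M (\<lambda>k. r x k - r j k)" by simp
    then show ?thesis using j by (intro bexI[of _ j]) auto
  qed
qed

lemma lex_le_iff:
  assumes "dim_vec \<alpha> = M" "dim_vec \<beta> = M"
  shows "lex_le \<alpha> \<beta> \<longleftrightarrow> lexnn M (\<lambda>k. \<beta> $ k - \<alpha> $ k)"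
proof
  assume "lex_le \<alpha> \<beta>"
  then show "lexnn M (\<lambda>k. \<beta> $ k - \<alpha> $ k)" unfolding lex_le_def lexnn_def using assms by auto
next
  assume h: "lexnn M (\<lambda>k. \<beta> $ k - \<alpha> $ k)"
  show "lex_le \<alpha> \<beta>"
  proof (cases "\<forall>k<M. \<beta> $ k - \<alpha> $ k = 0")
    case True
    then have "\<alpha> = \<beta>" using assms by (intro eq_vecI) auto
    then show ?thesis unfolding lex_le_def by auto
  next
    case False
    then show ?thesis using h assms unfolding lex_le_def lexnn_def by auto
  qed
qed




lemma pick_bij: "finite I \<Longrightarrow> bij_betw (pick I) {..<card I} I"
proof (rule bij_betw_imageI)
  assume fin: "finite I"
  show "inj_on (pick I) {..<card I}"
  proof (intro inj_onI)
    fix x y assume x: "x \<in> {..<card I}" and y: "y \<in> {..<card I}" and e: "pick I x = pick I y"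
    have "x = card {a\<in>I. a < pick I x}" using card_pick_le[of x I] x by simp
    also have "\<dots> = card {a\<in>I. a < pick I y}" using e by simp
    also have "\<dots> = y" using card_pick_le[of y I] y by simp
    finally show "x = y" .
  qed
  show "pick I ` {..<card I} = I"
  proof
    show "pick I ` {..<card I} \<subseteq> I" using pick_in_set by auto
    show "I \<subseteq> pick I ` {..<card I}"
    proof
      fix i assume i: "i \<in> I"
      have "{a\<in>I. a < i} \<subset> I" using i by auto
      then have "card {a\<in>I. a < i} < card I" using fin by (simp add: psubset_card_mono)
      moreover have "i = pick I (card {a\<in>I. a < i})" using pick_card_in_set[OF i] by simp
      ultimately show "i \<in> pick I ` {..<card I}" by blast
    qed
  qed
qed

lemma sp_lin:
  assumes "u \<in> carrier_vec n" "v \<in> carrier_vec n" "w \<in> carrier_vec n"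
  shows "u \<bullet> vec n (\<lambda>a. \<alpha> * v $ a + \<beta> * w $ a) = \<alpha> * (u \<bullet> v) + \<beta> * (u \<bullet> (w :: real vec))"
proof -
  have "u \<bullet> vec n (\<lambda>a. \<alpha> * v $ a + \<beta> * w $ a) = (\<Sum>i\<in>{0..<n}. u $ i * (\<alpha> * v $ i + \<beta> * w $ i))"
    unfolding scalar_prod_def by (intro sum.cong) auto
  also have "\<dots> = \<alpha> * (\<Sum>i\<in>{0..<n}. u $ i * v $ i) + \<beta> * (\<Sum>i\<in>{0..<n}. u $ i * w $ i)"
    by (simp add: distrib_left sum.distrib sum_distrib_left mult.assoc mult.left_commute)
  also have "\<dots> = \<alpha> * (u \<bullet> v) + \<beta> * (u \<bullet> w)"
    using assms unfolding scalar_prod_def by simp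
  finally show ?thesis .
qed

lemma sp_lin1:
  assumes "u \<in> carrier_vec n" "v \<in> carrier_vec n" "w \<in> carrier_vec n"
  shows "u \<bullet> vec n (\<lambda>a. v $ a + \<beta> * w $ a) = (u \<bullet> v) + \<beta> * (u \<bullet> (w :: real vec))"
  using sp_lin[OF assms, of 1 \<beta>] by simp

lemma sp_smult:
  assumes "u \<in> carrier_vec n" "w \<in> carrier_vec n"
  shows "u \<bullet> vec n (\<lambda>a. \<beta> * w $ a) = \<beta> * (u \<bullet> (w :: real vec))"
  using sp_lin[OF assms(1) assms(2) assms(2), of 0 \<beta>] by simp

lemma padding:
  assumes S: "S \<subseteq> carrier_vec n" "finite S" "card S < n"
  shows "\<exists>d\<in>carrier_vec n. d \<noteq> 0\<^sub>v n \<and> (\<forall>s\<in>S. s \<bullet> (d :: real vec) = 0)"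
proof -
  obtain f where f: "bij_betw f {0..<card S} S" using ex_bij_betw_nat_finite[OF S(2)] by blast
  define c where "c = (\<lambda>i. if i < card S then f i else 0\<^sub>v n)"
  have fS: "f i \<in> S" if "i < card S" for i using f that bij_betw_apply by fastforce
  have cc: "c \<in> {0..<n} \<rightarrow> carrier_vec n" using fS S(1) unfolding c_def by (auto simp: subset_iff)
  define M where "M = mat\<^sub>r n n (\<lambda>i. if i = n - 1 then 0\<^sub>v n else c i)"
  have M: "M \<in> carrier_mat n n" unfolding M_def by auto
  have "det M = 0" unfolding M_def by (rule det_row_0[OF _ cc]) (use S in auto)
  then obtain v where v: "v \<in> carrier_vec n" "v \<noteq> 0\<^sub>v n" "M *\<^sub>v v = 0\<^sub>v n"
    using det_0_iff_vec_prod_zero[OF M] by blast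
  show ?thesis
  proof (intro bexI[OF _ v(1)] conjI ballI v(2))
    fix s assume s: "s \<in> S"
    then obtain l where l: "l < card S" "f l = s" using f unfolding bij_betw_def by (metis atLeastLessThan_iff imageE)
    have ln: "l < n" "l \<noteq> n - 1" using l S by auto
    have "row M l = f l" unfolding M_def using ln l f S(1) s unfolding c_def by auto
    then have "(M *\<^sub>v v) $ l = s \<bullet> v" using ln M l by auto
    then show "s \<bullet> v = 0" using v(3) ln by auto
  qed
qed

locale lp =
  fixes A :: "real mat" and b :: "real vec" and m n :: nat
  assumes A: "A \<in> carrier_mat m n" and b: "b \<in> carrier_vec m"
begin

abbreviation "bt \<equiv> btilde m b"
abbreviation "SA I \<equiv> submatrix A I UNIV"
abbreviation "P \<equiv> polyhedron A b"

lemma dimA[simp]: "dim_row A = m" "dim_col A = n" using A by auto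

lemma bt_carrier: "bt \<in> carrier_mat m (1+m)" unfolding btilde_def by auto

lemma bt_index: "j < m \<Longrightarrow> k < 1+m \<Longrightarrow> bt $$ (j,k) = (if k = 0 then b $ j else if k = j + 1 then -1 else 0)"
  unfolding btilde_def by auto

lemma rowA[simp]: "j < m \<Longrightarrow> row A j \<in> carrier_vec n" using A by auto

lemma inP: "x \<in> P \<longleftrightarrow> x \<in> carrier_vec n \<and> (\<forall>j<m. row A j \<bullet> x \<ge> b $ j)"
  unfolding polyhedron_def using A by auto

definition feas :: "real mat \<Rightarrow> bool" where
  "feas X \<longleftrightarrow> (\<forall>j<m. lexnn (1+m) (\<lambda>k. (A*X) $$ (j,k) - bt $$ (j,k)))"

lemma mat_lex_ge_iff:
  assumes X: "X \<in> carrier_mat n (1+m)"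
  shows "mat_lex_ge (A*X) bt \<longleftrightarrow> feas X"
proof -
  have "lex_le (row bt j) (row (A*X) j) \<longleftrightarrow> lexnn (1+m) (\<lambda>k. (A*X) $$ (j,k) - bt $$ (j,k))" if j: "j < m" for j
  proof -
    have "lex_le (row bt j) (row (A*X) j) \<longleftrightarrow> lexnn (1+m) (\<lambda>k. row (A*X) j $ k - row bt j $ k)"
      by (rule lex_le_iff) (use X bt_carrier in auto)
    also have "\<dots> \<longleftrightarrow> lexnn (1+m) (\<lambda>k. (A*X) $$ (j,k) - bt $$ (j,k))"
      by (rule lexnn_cong) (use X bt_carrier j in auto)
    finally show ?thesis .
  qed
  then show ?thesis unfolding mat_lex_ge_def feas_def by auto
qed

definition tightX :: "real mat \<Rightarrow> nat set \<Rightarrow> bool" where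
  "tightX X I \<longleftrightarrow> (\<forall>i\<in>I. \<forall>k<1+m. (A*X) $$ (i,k) = bt $$ (i,k))"

definition dualb :: "nat set \<Rightarrow> bool" where
  "dualb I \<longleftrightarrow> (\<forall>i\<in>I. \<exists>D\<in>carrier_vec n. row A i \<bullet> D \<noteq> 0 \<and> (\<forall>i'\<in>I. i' \<noteq> i \<longrightarrow> row A i' \<bullet> D = 0))"

lemma SA_facts:
  assumes I: "I \<subseteq> {..<m}"
  shows "{i. i < m \<and> i \<in> I} = I" "SA I \<in> carrier_mat (card I) n"
    "\<And>k. k < card I \<Longrightarrow> row (SA I) k = row A (pick I k)"
    "\<And>k. k < card I \<Longrightarrow> pick I k \<in> I"
    "finite I"
proof -
  show e: "{i. i < m \<and> i \<in> I} = I" using I by auto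
  show fin: "finite I" using I finite_subset by blast
  show "SA I \<in> carrier_mat (card I) n" unfolding submatrix_def using e by auto
  fix k assume k: "k < card I"
  show "pick I k \<in> I" using pick_in_set k by auto
  then have pk: "pick I k < m" using I by auto
  show "row (SA I) k = row A (pick I k)"
    by (rule eq_vecI) (use k e pk in \<open>auto simp: submatrix_def pick_UNIV\<close>)
qed

lemma SA_ker:
  assumes I: "I \<subseteq> {..<m}" "card I = n" and d: "det (SA I) \<noteq> 0"
    and y: "y \<in> carrier_vec n" "\<forall>i\<in>I. row A i \<bullet> y = 0"
  shows "y = 0\<^sub>v n"
proof -
  note F = SA_facts[OF I(1)]
  have "SA I *\<^sub>v y = 0\<^sub>v n"
    by (rule eq_vecI) (use F I y in auto)
  then show ?thesis using det_0_iff_vec_prod_zero[of "SA I" n] F(2) I d y by auto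
qed

lemma SA_rows_iff:
  assumes I: "I \<subseteq> {..<m}" and X: "X \<in> carrier_mat n (1+m)"
  shows "SA I * X = submatrix bt I UNIV \<longleftrightarrow> tightX X I"
proof -
  note F = SA_facts[OF I(1)]
  have dbt: "dim_row bt = m" "dim_col bt = 1 + m" using bt_carrier by auto
  have sb: "submatrix bt I UNIV \<in> carrier_mat (card I) (1+m)"
    unfolding submatrix_def dbt F(1) by auto
  have ent: "(SA I * X) $$ (k,l) = (A*X) $$ (pick I k, l)" if "k < card I" "l < 1+m" for k l
  proof -
    have "pick I k \<in> I" using F(4)[OF that(1)] .
    then have "pick I k < m" using I by auto
    then show ?thesis using that F X by auto
  qed
  have ent2: "submatrix bt I UNIV $$ (k,l) = bt $$ (pick I k, l)" if "k < card I" "l < 1+m" for k l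
    using that by (subst submatrix_index) (auto simp: dbt F(1) pick_UNIV)
  show ?thesis
  proof
    assume h: "SA I * X = submatrix bt I UNIV"
    show "tightX X I" unfolding tightX_def
    proof (intro ballI allI impI)
      fix i k assume i: "i \<in> I" and k: "k < 1+m"
      obtain kk where kk: "kk < card I" "pick I kk = i" using pick_bij[OF F(5)] i
        unfolding bij_betw_def by (metis imageE lessThan_iff)
      show "(A*X) $$ (i,k) = bt $$ (i,k)" using ent[OF kk(1) k] ent2[OF kk(1) k] h kk by auto
    qed
  next
    assume h: "tightX X I"
    show "SA I * X = submatrix bt I UNIV"
    proof (rule eq_matI)
      fix k l assume kl: "k < dim_row (submatrix bt I UNIV)" "l < dim_col (submatrix bt I UNIV)"
      then have k: "k < card I" and l: "l < 1+m" using sb by auto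
      have "pick I k \<in> I" using F(4)[OF k] .
      then have "(A*X) $$ (pick I k, l) = bt $$ (pick I k, l)" using h l unfolding tightX_def by blast
      then show "(SA I * X) $$ (k,l) = submatrix bt I UNIV $$ (k,l)"
        using ent[OF k l] ent2[OF k l] by simp
    next
      show "dim_row (SA I * X) = dim_row (submatrix bt I UNIV)" using sb F(2) by simp
      show "dim_col (SA I * X) = dim_col (submatrix bt I UNIV)" using sb X by simp
    qed
  qed
qed

lemma XI_eq:
  assumes I: "I \<subseteq> {..<m}" "card I = n" and d: "det (SA I) \<noteq> 0"
    and X: "X \<in> carrier_mat n (1+m)" and t: "tightX X I"
  shows "XI A b I = X"
  unfolding XI_def
proof (rule the_equality)
  show "X \<in> carrier_mat (dim_col A) (1 + dim_row A) \<and> SA I * X = submatrix (btilde (dim_row A) b) I UNIV"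
    using X SA_rows_iff[OF I(1) X] t by auto
next
  fix Y assume Y: "Y \<in> carrier_mat (dim_col A) (1 + dim_row A) \<and> SA I * Y = submatrix (btilde (dim_row A) b) I UNIV"
  then have Y1: "Y \<in> carrier_mat n (1+m)" and t2: "tightX Y I" using SA_rows_iff[OF I(1)] by auto
  show "Y = X"
  proof (rule eq_matI)
    fix i k assume i: "i < dim_row X" and k: "k < dim_col X"
    define y where "y = vec n (\<lambda>a. Y $$ (a,k) - X $$ (a,k))"
    have "y = 0\<^sub>v n"
    proof (rule SA_ker[OF I d])
      show "y \<in> carrier_vec n" unfolding y_def by auto
      show "\<forall>i\<in>I. row A i \<bullet> y = 0"
      proof
        fix j assume j: "j \<in> I"
        then have jm: "j < m" using I by auto
        have "y = vec n (\<lambda>a. 1 * col Y k $ a + (-1) * col X k $ a)"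
          unfolding y_def by (rule eq_vecI) (use X Y1 k in auto)
        then have "row A j \<bullet> y = row A j \<bullet> col Y k - row A j \<bullet> col X k"
          using sp_lin[of "row A j" n "col Y k" "col X k" 1 "-1"] X Y1 k jm by auto
        also have "\<dots> = (A*Y) $$ (j,k) - (A*X) $$ (j,k)" using X Y1 k jm by auto
        also have "\<dots> = 0" using t t2 j k X unfolding tightX_def by auto
        finally show "row A j \<bullet> y = 0" .
      qed
    qed
    then have "y $ i = 0" using i X by auto
    then show "Y $$ (i,k) = X $$ (i,k)" unfolding y_def using i X by auto
  next
    show "dim_row Y = dim_row X" "dim_col Y = dim_col X" using X Y1 by auto
  qed
qed

lemma XI_exists:
  assumes I: "I \<subseteq> {..<m}" "card I = n" and d: "det (SA I) \<noteq> 0"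
  shows "XI A b I \<in> carrier_mat n (1+m) \<and> tightX (XI A b I) I"
proof -
  note F = SA_facts[OF I(1)]
  have SAc: "SA I \<in> carrier_mat n n" using F I by auto
  from det_non_zero_imp_unit[OF SAc d, unfolded Units_def, of "()"]
  obtain B where B: "B \<in> carrier_mat n n" and AB: "SA I * B = 1\<^sub>m n"
    by (auto simp: ring_mat_def)
  have dbt: "dim_row bt = m" "dim_col bt = 1 + m" using bt_carrier by auto
  have sb: "submatrix bt I UNIV \<in> carrier_mat n (1+m)"
    unfolding submatrix_def dbt F(1) using I by auto
  define X where "X = B * submatrix bt I UNIV"
  have X: "X \<in> carrier_mat n (1+m)" unfolding X_def using B sb by auto
  have "SA I * X = (SA I * B) * submatrix bt I UNIV" unfolding X_def
    using assoc_mult_mat[OF SAc B sb] by simp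
  also have "\<dots> = submatrix bt I UNIV" unfolding AB using sb by simp
  finally have "tightX X I" using SA_rows_iff[OF I(1) X] by simp
  then show ?thesis using XI_eq[OF I d X] X by simp
qed

end



context lp begin

abbreviation "phi I \<equiv> first_col (XI A b I)"

lemma lfb_iff: "lex_feasible_basis A b I \<longleftrightarrow> I \<subseteq> {..<m} \<and> card I = n \<and> det (SA I) \<noteq> 0 \<and> feas (XI A b I)"
proof
  assume h: "lex_feasible_basis A b I"
  then have I: "I \<subseteq> {..<m}" "card I = n" "det (SA I) \<noteq> 0" unfolding lex_feasible_basis_def by auto
  note X = XI_exists[OF I]
  show "I \<subseteq> {..<m} \<and> card I = n \<and> det (SA I) \<noteq> 0 \<and> feas (XI A b I)"
    using I h mat_lex_ge_iff[of "XI A b I"] X unfolding lex_feasible_basis_def by auto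
next
  assume h: "I \<subseteq> {..<m} \<and> card I = n \<and> det (SA I) \<noteq> 0 \<and> feas (XI A b I)"
  then have I: "I \<subseteq> {..<m}" "card I = n" "det (SA I) \<noteq> 0" by auto
  note X = XI_exists[OF I]
  show "lex_feasible_basis A b I"
    using I h mat_lex_ge_iff[of "XI A b I"] X unfolding lex_feasible_basis_def by auto
qed

lemma vec_eq_by_diff:
  assumes "x \<in> carrier_vec n" "v \<in> carrier_vec n" "vec n (\<lambda>a. x $ a + (-1) * v $ a) = 0\<^sub>v n"
  shows "x = (v :: real vec)"
proof (rule eq_vecI)
  fix a assume "a < dim_vec v"
  then have a: "a < n" using assms by simp
  have "vec n (\<lambda>a. x $ a + (-1) * v $ a) $ a = 0"
    by (subst assms(3)) (use a in simp)
  then show "x $ a = v $ a" using a by simp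
qed (use assms in auto)

lemma lfb_basic:
  assumes "lex_feasible_basis A b I"
  shows "phi I \<in> carrier_vec n" "phi I \<in> P" "\<forall>i\<in>I. row A i \<bullet> phi I = b $ i"
    "\<And>y. y \<in> carrier_vec n \<Longrightarrow> \<forall>i\<in>I. row A i \<bullet> y = 0 \<Longrightarrow> y = 0\<^sub>v n"
    "I \<subseteq> {..<m}" "card I = n" "finite I"
proof -
  have I: "I \<subseteq> {..<m}" "card I = n" "det (SA I) \<noteq> 0" "feas (XI A b I)" using assms lfb_iff by auto
  show "I \<subseteq> {..<m}" "card I = n" using I by auto
  show "finite I" using I(1) finite_subset by blast
  note X = XI_exists[OF I(1-3)]
  define Y where "Y = XI A b I"
  have Y: "Y \<in> carrier_mat n (1+m)" "tightX Y I" "feas Y" using X I unfolding Y_def by auto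
  have ph: "phi I = col Y 0" unfolding Y_def first_col_def by simp
  show c: "phi I \<in> carrier_vec n" unfolding ph using Y by auto
  have e: "(A*Y) $$ (j,0) = row A j \<bullet> phi I" if "j < m" for j using that Y ph by auto
  show "phi I \<in> P" unfolding inP
  proof (intro conjI allI impI c)
    fix j assume j: "j < m"
    have "lexnn (1+m) (\<lambda>k. (A*Y) $$ (j,k) - bt $$ (j,k))" using Y(3) j unfolding feas_def by auto
    from lexnn_first[OF this] have "(A*Y) $$ (j,0) - bt $$ (j,0) \<ge> 0" by simp
    then show "row A j \<bullet> phi I \<ge> b $ j" using e[OF j] bt_index[OF j] by simp
  qed
  show "\<forall>i\<in>I. row A i \<bullet> phi I = b $ i"
  proof
    fix i assume i: "i \<in> I"
    then have im: "i < m" using I by auto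
    have "(A*Y) $$ (i,0) = bt $$ (i,0)" using Y(2) i unfolding tightX_def by auto
    then show "row A i \<bullet> phi I = b $ i" using e[OF im] bt_index[OF im] by simp
  qed
  fix y assume "y \<in> carrier_vec n" "\<forall>i\<in>I. row A i \<bullet> y = 0"
  then show "y = 0\<^sub>v n" using SA_ker[OF I(1-3)] by auto
qed

definition cvec :: "nat set \<Rightarrow> real vec" where
  "cvec S = vec n (\<lambda>a. \<Sum>i\<in>S. A $$ (i,a))"

lemma cvec_carrier[simp]: "cvec S \<in> carrier_vec n" unfolding cvec_def by simp

lemma cvec_sp:
  assumes S: "S \<subseteq> {..<m}" and x: "x \<in> carrier_vec n"
  shows "cvec S \<bullet> x = (\<Sum>i\<in>S. row A i \<bullet> x)"
proof -
  have "cvec S \<bullet> x = (\<Sum>a\<in>{0..<n}. (\<Sum>i\<in>S. A $$ (i,a)) * x $ a)"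
    unfolding cvec_def scalar_prod_def using x by (intro sum.cong) auto
  also have "\<dots> = (\<Sum>a\<in>{0..<n}. \<Sum>i\<in>S. A $$ (i,a) * x $ a)"
    by (simp add: sum_distrib_right)
  also have "\<dots> = (\<Sum>i\<in>S. \<Sum>a\<in>{0..<n}. A $$ (i,a) * x $ a)"
    by (rule sum.swap)
  also have "\<dots> = (\<Sum>i\<in>S. row A i \<bullet> x)"
  proof (rule sum.cong)
    fix i assume "i \<in> S"
    then have i: "i < m" using S by auto
    show "(\<Sum>a\<in>{0..<n}. A $$ (i,a) * x $ a) = row A i \<bullet> x"
      unfolding scalar_prod_def using x i by (intro sum.cong) auto
  qed simp
  finally show ?thesis .
qed

lemma inP_D: "x \<in> P \<Longrightarrow> x \<in> carrier_vec n" "x \<in> P \<Longrightarrow> j < m \<Longrightarrow> row A j \<bullet> x \<ge> b $ j"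
  using inP by auto

lemma face_tight:
  assumes S: "S \<subseteq> {..<m}" and x0: "x0 \<in> P" "\<forall>i\<in>S. row A i \<bullet> x0 = b $ i"
  shows "{x\<in>P. \<forall>y\<in>P. cvec S \<bullet> x \<le> cvec S \<bullet> y} = {x\<in>P. \<forall>i\<in>S. row A i \<bullet> x = b $ i}"
proof -
  have fin: "finite S" using S finite_subset by blast
  have ge: "cvec S \<bullet> x \<ge> (\<Sum>i\<in>S. b $ i)" if x: "x \<in> P" for x
  proof -
    have "cvec S \<bullet> x = (\<Sum>i\<in>S. row A i \<bullet> x)" using cvec_sp[OF S inP_D(1)[OF x]] .
    also have "\<dots> \<ge> (\<Sum>i\<in>S. b $ i)"
    proof (rule sum_mono)
      fix i assume "i \<in> S" then have "i < m" using S by auto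
      then show "b $ i \<le> row A i \<bullet> x" using inP_D(2)[OF x] by blast
    qed
    finally show ?thesis .
  qed
  have eq0: "cvec S \<bullet> x0 = (\<Sum>i\<in>S. b $ i)" using cvec_sp[OF S inP_D(1)[OF x0(1)]] x0(2) by simp
  show ?thesis
  proof (intro equalityI subsetI)
    fix x assume "x \<in> {x\<in>P. \<forall>y\<in>P. cvec S \<bullet> x \<le> cvec S \<bullet> y}"
    then have x: "x \<in> P" "cvec S \<bullet> x \<le> cvec S \<bullet> x0" using x0 by auto
    have "(\<Sum>i\<in>S. row A i \<bullet> x - b $ i) = (\<Sum>i\<in>S. row A i \<bullet> x) - (\<Sum>i\<in>S. b $ i)"
      by (rule sum_subtractf)
    also have "\<dots> = cvec S \<bullet> x - (\<Sum>i\<in>S. b $ i)" using cvec_sp[OF S inP_D(1)[OF x(1)]] by simp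
    also have "\<dots> = 0" using x eq0 ge[OF x(1)] by linarith
    finally have "(\<Sum>i\<in>S. row A i \<bullet> x - b $ i) = 0" .
    moreover have "\<forall>i\<in>S. 0 \<le> row A i \<bullet> x - b $ i"
    proof
      fix i assume "i \<in> S" then have "i < m" using S by auto
      then show "0 \<le> row A i \<bullet> x - b $ i" using inP_D(2)[OF x(1)] by fastforce
    qed
    ultimately have "\<forall>i\<in>S. row A i \<bullet> x - b $ i = 0"
      using sum_nonneg_eq_0_iff[OF fin, of "\<lambda>i. row A i \<bullet> x - b $ i"] by simp
    then show "x \<in> {x\<in>P. \<forall>i\<in>S. row A i \<bullet> x = b $ i}" using x by auto
  next
    fix x assume "x \<in> {x\<in>P. \<forall>i\<in>S. row A i \<bullet> x = b $ i}"
    then have x: "x \<in> P" "\<forall>i\<in>S. row A i \<bullet> x = b $ i" by auto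
    have "cvec S \<bullet> x = (\<Sum>i\<in>S. b $ i)" using cvec_sp[OF S inP_D(1)[OF x(1)]] x(2) by simp
    then show "x \<in> {x\<in>P. \<forall>y\<in>P. cvec S \<bullet> x \<le> cvec S \<bullet> y}" using x(1) ge by auto
  qed
qed

lemma lfb_vertex:
  assumes h: "lex_feasible_basis A b I"
  shows "is_vertex n P (phi I)"
proof -
  note L = lfb_basic[OF h]
  have "{x\<in>P. \<forall>y\<in>P. cvec I \<bullet> x \<le> cvec I \<bullet> y} = {x\<in>P. \<forall>i\<in>I. row A i \<bullet> x = b $ i}"
    by (rule face_tight) (use L(2) L(3) L(5) in auto)
  also have "\<dots> = {phi I}"
  proof (intro equalityI subsetI)
    fix x assume "x \<in> {x\<in>P. \<forall>i\<in>I. row A i \<bullet> x = b $ i}"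
    then have x: "x \<in> P" "\<forall>i\<in>I. row A i \<bullet> x = b $ i" by auto
    have xc: "x \<in> carrier_vec n" using x inP by auto
    have "vec n (\<lambda>a. x $ a + (-1) * phi I $ a) = 0\<^sub>v n"
    proof (rule L(4))
      show "\<forall>i\<in>I. row A i \<bullet> vec n (\<lambda>a. x $ a + - 1 * phi I $ a) = 0"
      proof
        fix i assume i: "i \<in> I"
        then have "i < m" using L(5) by auto
        then show "row A i \<bullet> vec n (\<lambda>a. x $ a + - 1 * phi I $ a) = 0"
          using sp_lin1[of "row A i" n x "phi I" "-1"] xc L(1) L(3) x i by auto
      qed
    qed simp
    then show "x \<in> {phi I}" using vec_eq_by_diff xc L(1) by auto
  qed (use L(2) L(3) in auto)
  finally show ?thesis unfolding is_vertex_def is_face_def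
    by (intro conjI bexI[of _ "cvec I"]) auto
qed

end



context lp begin

lemma seg_vec:
  assumes "v \<in> carrier_vec n" "w \<in> carrier_vec n"
  shows "(1 - t) \<cdot>\<^sub>v v + t \<cdot>\<^sub>v w = vec n (\<lambda>a. (1 - t) * v $ a + t * (w :: real vec) $ a)"
  by (rule eq_vecI) (use assms in auto)

lemma conv_ge:
  assumes "p \<ge> c" "q \<ge> c" "0 \<le> t" "t \<le> (1::real)"
  shows "(1 - t) * p + t * q \<ge> c"
proof -
  have "(1 - t) * p \<ge> (1 - t) * c" using assms by (intro mult_left_mono) auto
  moreover have "t * q \<ge> t * c" using assms by (intro mult_left_mono) auto
  ultimately show ?thesis by (simp add: algebra_simps)
qed

lemma lfb_adj:
  assumes h1: "lex_feasible_basis A b I" and h2: "lex_feasible_basis A b I'"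
    and c: "card (I \<inter> I') = n - 1" and ne: "phi I \<noteq> phi I'"
  shows "adjacent n P (phi I) (phi I')"
proof -
  define v where "v = phi I"
  define w where "w = phi I'"
  note L1 = lfb_basic[OF h1, folded v_def] and L2 = lfb_basic[OF h2, folded w_def]
  have vw: "v \<noteq> w" using ne unfolding v_def w_def .
  have n1: "n \<ge> 1"
  proof (rule ccontr)
    assume "\<not> n \<ge> 1" then have "n = 0" by auto
    then have "v = w" using L1(1) L2(1) by (intro eq_vecI) auto
    then show False using vw by simp
  qed
  define K where "K = I \<inter> I'"
  have KI: "K \<subseteq> I" "K \<subseteq> I'" unfolding K_def by auto
  have cK: "card K = n - 1" using c unfolding K_def .
  have "card (I - K) = 1" using card_Diff_subset[OF finite_subset[OF KI(1) L1(7)] KI(1)] L1(6) cK n1 by simp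
  then obtain i where i: "I - K = {i}" using card_1_singletonE by blast
  have iI: "i \<in> I" "i \<notin> K" using i by auto
  have Ieq: "I = insert i K" using i KI by auto
  have im: "i < m" using iI L1(5) by auto
  have Km: "K \<subseteq> {..<m}" using KI L1(5) by auto
  define d where "d = vec n (\<lambda>a. w $ a + (-1) * v $ a)"
  have dc: "d \<in> carrier_vec n" unfolding d_def by simp
  have rd: "u \<bullet> d = u \<bullet> w - u \<bullet> v" if "u \<in> carrier_vec n" for u
    using sp_lin1[OF that L2(1) L1(1), of "-1"] unfolding d_def by simp
  have Kt: "row A k \<bullet> v = b $ k" "row A k \<bullet> w = b $ k" if "k \<in> K" for k
    using that KI L1(3) L2(3) by auto
  have Kd: "row A k \<bullet> d = 0" if "k \<in> K" for k
    using Kt[OF that] rd[of "row A k"] that Km by auto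
  have id: "row A i \<bullet> d \<noteq> 0"
  proof
    assume z: "row A i \<bullet> d = 0"
    have "d = 0\<^sub>v n"
    proof (rule L1(4)[OF dc])
      show "\<forall>j\<in>I. row A j \<bullet> d = 0" using z Kd Ieq by auto
    qed
    then have "w = v" using vec_eq_by_diff[OF L2(1) L1(1)] unfolding d_def by simp
    then show False using vw by simp
  qed
  have minI: "{x\<in>P. \<forall>y\<in>P. cvec I \<bullet> x \<le> cvec I \<bullet> y} = {x\<in>P. \<forall>j\<in>I. row A j \<bullet> x = b $ j}"
    by (rule face_tight[OF L1(5) L1(2) L1(3)])
  have minI': "{x\<in>P. \<forall>y\<in>P. cvec I' \<bullet> x \<le> cvec I' \<bullet> y} = {x\<in>P. \<forall>j\<in>I'. row A j \<bullet> x = b $ j}"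
    by (rule face_tight[OF L2(5) L2(2) L2(3)])
  have vmin: "\<forall>y\<in>P. cvec I \<bullet> v \<le> cvec I \<bullet> y" using minI L1(2) L1(3) by blast
  have wmin: "\<forall>y\<in>P. cvec I' \<bullet> w \<le> cvec I' \<bullet> y" using minI' L2(2) L2(3) by blast
  have strict1: "cvec I \<bullet> w > cvec I \<bullet> v"
  proof (rule ccontr)
    assume "\<not> cvec I \<bullet> w > cvec I \<bullet> v"
    then have "\<forall>y\<in>P. cvec I \<bullet> w \<le> cvec I \<bullet> y" using vmin by force
    then have "w \<in> {x\<in>P. \<forall>j\<in>I. row A j \<bullet> x = b $ j}" using minI L2(2) by blast
    then have wt: "\<forall>j\<in>I. row A j \<bullet> w = b $ j" by blast
    have "d = 0\<^sub>v n"
    proof (rule L1(4)[OF dc])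
      show "\<forall>j\<in>I. row A j \<bullet> d = 0"
      proof
        fix j assume j: "j \<in> I" then have "j < m" using L1(5) by auto
        then show "row A j \<bullet> d = 0" using rd[of "row A j"] wt L1(3) j by auto
      qed
    qed
    then have "w = v" using vec_eq_by_diff[OF L2(1) L1(1)] unfolding d_def by simp
    then show False using vw by simp
  qed
  have strict2: "cvec I' \<bullet> v > cvec I' \<bullet> w"
  proof (rule ccontr)
    assume "\<not> cvec I' \<bullet> v > cvec I' \<bullet> w"
    then have "\<forall>y\<in>P. cvec I' \<bullet> v \<le> cvec I' \<bullet> y" using wmin by force
    then have "v \<in> {x\<in>P. \<forall>j\<in>I'. row A j \<bullet> x = b $ j}" using minI' L1(2) by blast
    then have vt: "\<forall>j\<in>I'. row A j \<bullet> v = b $ j" by blast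
    have "d = 0\<^sub>v n"
    proof (rule L2(4)[OF dc])
      show "\<forall>j\<in>I'. row A j \<bullet> d = 0"
      proof
        fix j assume j: "j \<in> I'" then have "j < m" using L2(5) by auto
        then show "row A j \<bullet> d = 0" using rd[of "row A j"] vt L2(3) j by auto
      qed
    qed
    then have "w = v" using vec_eq_by_diff[OF L2(1) L1(1)] unfolding d_def by simp
    then show False using vw by simp
  qed
  have faceK: "{x\<in>P. \<forall>y\<in>P. cvec K \<bullet> x \<le> cvec K \<bullet> y} = {x\<in>P. \<forall>j\<in>K. row A j \<bullet> x = b $ j}"
    by (rule face_tight[OF Km L1(2)]) (use Kt in auto)
  have segeq: "{x\<in>P. \<forall>j\<in>K. row A j \<bullet> x = b $ j} = closed_segment_vec v w"
  proof (intro equalityI subsetI)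
    fix x assume "x \<in> {x\<in>P. \<forall>j\<in>K. row A j \<bullet> x = b $ j}"
    then have x: "x \<in> P" "\<forall>j\<in>K. row A j \<bullet> x = b $ j" by auto
    have xc: "x \<in> carrier_vec n" using inP_D(1)[OF x(1)] .
    define s where "s = (row A i \<bullet> x - row A i \<bullet> v) / (row A i \<bullet> d)"
    define xs where "xs = vec n (\<lambda>a. v $ a + s * d $ a)"
    have xsc: "xs \<in> carrier_vec n" unfolding xs_def by simp
    have rxs: "u \<bullet> xs = u \<bullet> v + s * (u \<bullet> d)" if "u \<in> carrier_vec n" for u
      unfolding xs_def by (rule sp_lin1[OF that L1(1) dc])
    have "vec n (\<lambda>a. x $ a + (-1) * xs $ a) = 0\<^sub>v n"
    proof (rule L1(4))
      show "\<forall>j\<in>I. row A j \<bullet> vec n (\<lambda>a. x $ a + (-1) * xs $ a) = 0"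
      proof
        fix j assume j: "j \<in> I" then have jm: "j < m" using L1(5) by auto
        have e: "row A j \<bullet> vec n (\<lambda>a. x $ a + (-1) * xs $ a) = row A j \<bullet> x - (row A j \<bullet> v + s * (row A j \<bullet> d))"
          using sp_lin1[OF rowA[OF jm] xc xsc, of "-1"] rxs[OF rowA[OF jm]] by simp
        show "row A j \<bullet> vec n (\<lambda>a. x $ a + (-1) * xs $ a) = 0"
        proof (cases "j \<in> K")
          case True then show ?thesis using e x(2) Kt Kd by simp
        next
          case False then have "j = i" using Ieq j by auto
          then show ?thesis using e id unfolding s_def by (simp add: field_simps)
        qed
      qed
    qed simp
    then have xxs: "x = xs" using vec_eq_by_diff[OF xc xsc] by simp
    have cI: "cvec I \<bullet> x = cvec I \<bullet> v + s * (cvec I \<bullet> w - cvec I \<bullet> v)"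
      using rxs[of "cvec I"] rd[of "cvec I"] xxs by simp
    have cI': "cvec I' \<bullet> x = cvec I' \<bullet> v + s * (cvec I' \<bullet> w - cvec I' \<bullet> v)"
      using rxs[of "cvec I'"] rd[of "cvec I'"] xxs by simp
    have "cvec I \<bullet> v \<le> cvec I \<bullet> x" using vmin x(1) by blast
    then have "0 \<le> s * (cvec I \<bullet> w - cvec I \<bullet> v)" using cI by simp
    then have s0: "0 \<le> s" using strict1 by (simp add: zero_le_mult_iff)
    have "cvec I' \<bullet> w \<le> cvec I' \<bullet> x" using wmin x(1) by blast
    moreover have "(1 - s) * (cvec I' \<bullet> v - cvec I' \<bullet> w) = cvec I' \<bullet> x - cvec I' \<bullet> w"
      using cI' by (simp add: algebra_simps)
    ultimately have "0 \<le> (1 - s) * (cvec I' \<bullet> v - cvec I' \<bullet> w)" by simp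
    then have s1: "s \<le> 1" using strict2 by (simp add: zero_le_mult_iff)
    have "x = (1 - s) \<cdot>\<^sub>v v + s \<cdot>\<^sub>v w"
      unfolding seg_vec[OF L1(1) L2(1)] xxs xs_def d_def by (rule eq_vecI) (auto simp: algebra_simps)
    then show "x \<in> closed_segment_vec v w" unfolding closed_segment_vec_def using s0 s1 by blast
  next
    fix x assume "x \<in> closed_segment_vec v w"
    then obtain t where t: "0 \<le> t" "t \<le> 1" "x = (1 - t) \<cdot>\<^sub>v v + t \<cdot>\<^sub>v w"
      unfolding closed_segment_vec_def by blast
    have xe: "x = vec n (\<lambda>a. (1 - t) * v $ a + t * w $ a)" using t(3) seg_vec[OF L1(1) L2(1)] by simp
    have rx: "row A j \<bullet> x = (1 - t) * (row A j \<bullet> v) + t * (row A j \<bullet> w)" if "j < m" for j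
      unfolding xe by (rule sp_lin[OF rowA[OF that] L1(1) L2(1)])
    have "x \<in> P" unfolding inP
    proof (intro conjI allI impI)
      show "x \<in> carrier_vec n" unfolding xe by simp
      fix j assume j: "j < m"
      show "b $ j \<le> row A j \<bullet> x" unfolding rx[OF j]
        by (rule conv_ge) (use inP_D(2)[OF L1(2) j] inP_D(2)[OF L2(2) j] t in auto)
    qed
    moreover have "\<forall>j\<in>K. row A j \<bullet> x = b $ j"
    proof
      fix j assume j: "j \<in> K" then have jm: "j < m" using Km by auto
      show "row A j \<bullet> x = b $ j" unfolding rx[OF jm] using Kt[OF j] by (simp add: algebra_simps)
    qed
    ultimately show "x \<in> {x\<in>P. \<forall>j\<in>K. row A j \<bullet> x = b $ j}" by blast
  qed
  have vseg: "v \<in> closed_segment_vec v w"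
  proof -
    have "v = (1 - 0) \<cdot>\<^sub>v v + 0 \<cdot>\<^sub>v w" using L1(1) L2(1) by (intro eq_vecI) auto
    then show ?thesis unfolding closed_segment_vec_def by fastforce
  qed
  have "is_face n P (closed_segment_vec v w)"
    unfolding is_face_def
  proof (intro conjI bexI[of _ "cvec K"])
    show "closed_segment_vec v w \<noteq> {}" using vseg by blast
    show "closed_segment_vec v w = {x \<in> P. \<forall>y\<in>P. cvec K \<bullet> x \<le> cvec K \<bullet> y}"
      using faceK segeq by simp
  qed simp
  then show ?thesis unfolding adjacent_def v_def[symmetric] w_def[symmetric]
    using lfb_vertex[OF h1] lfb_vertex[OF h2] vw unfolding v_def w_def by blast
qed

end



context lp begin

lemma small_move:
  assumes x: "x \<in> P" and y: "y \<in> carrier_vec n"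
    and tz: "\<forall>j<m. row A j \<bullet> x = b $ j \<longrightarrow> row A j \<bullet> y = 0"
  shows "\<exists>\<tau>>0. \<forall>\<sigma>. \<bar>\<sigma>\<bar> \<le> \<tau> \<longrightarrow> vec n (\<lambda>a. x $ a + \<sigma> * y $ a) \<in> P"
proof -
  have xc: "x \<in> carrier_vec n" using inP_D(1)[OF x] .
  define F where "F = {j. j < m \<and> row A j \<bullet> y \<noteq> 0}"
  define sl where "sl = (\<lambda>j. (row A j \<bullet> x - b $ j) / \<bar>row A j \<bullet> y\<bar>)"
  define \<tau> where "\<tau> = Min (insert 1 (sl ` F))"
  have finF: "finite F" unfolding F_def by auto
  have slpos: "sl j > 0" if "j \<in> F" for j
  proof -
    have j: "j < m" "row A j \<bullet> y \<noteq> 0" using that unfolding F_def by auto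
    have "row A j \<bullet> x \<ge> b $ j" using inP_D(2)[OF x j(1)] .
    moreover have "row A j \<bullet> x \<noteq> b $ j" using tz j by auto
    ultimately show ?thesis unfolding sl_def using j by (simp add: divide_pos_pos)
  qed
  have tpos: "\<tau> > 0" unfolding \<tau>_def using finF slpos by (subst Min_gr_iff) auto
  have tle: "\<tau> \<le> sl j" if "j \<in> F" for j unfolding \<tau>_def using finF that by (intro Min_le) auto
  show ?thesis
  proof (intro exI[of _ \<tau>] conjI allI impI tpos)
    fix \<sigma> :: real assume s: "\<bar>\<sigma>\<bar> \<le> \<tau>"
    show "vec n (\<lambda>a. x $ a + \<sigma> * y $ a) \<in> P" unfolding inP
    proof (intro conjI allI impI)
      show "vec n (\<lambda>a. x $ a + \<sigma> * y $ a) \<in> carrier_vec n" by simp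
      fix j assume j: "j < m"
      have e: "row A j \<bullet> vec n (\<lambda>a. x $ a + \<sigma> * y $ a) = row A j \<bullet> x + \<sigma> * (row A j \<bullet> y)"
        by (rule sp_lin1[OF rowA[OF j] xc y])
      have bx: "row A j \<bullet> x \<ge> b $ j" using inP_D(2)[OF x j] .
      show "b $ j \<le> row A j \<bullet> vec n (\<lambda>a. x $ a + \<sigma> * y $ a)"
      proof (cases "row A j \<bullet> y = 0")
        case True then show ?thesis using e bx by simp
      next
        case False
        then have jF: "j \<in> F" unfolding F_def using j by auto
        have ay: "\<bar>row A j \<bullet> y\<bar> > 0" using False by simp
        have "\<bar>\<sigma> * (row A j \<bullet> y)\<bar> = \<bar>\<sigma>\<bar> * \<bar>row A j \<bullet> y\<bar>" by (simp add: abs_mult)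
        also have "\<dots> \<le> \<tau> * \<bar>row A j \<bullet> y\<bar>" using s by (intro mult_right_mono) auto
        also have "\<dots> \<le> sl j * \<bar>row A j \<bullet> y\<bar>" using tle[OF jF] by (intro mult_right_mono) auto
        also have "\<dots> = row A j \<bullet> x - b $ j" unfolding sl_def using ay by simp
        finally have "\<bar>\<sigma> * (row A j \<bullet> y)\<bar> \<le> row A j \<bullet> x - b $ j" .
        then show ?thesis using e by linarith
      qed
    qed
  qed
qed

lemma vertex_in:
  assumes "is_vertex n P v" shows "v \<in> P" "\<exists>c\<in>carrier_vec n. \<forall>z\<in>P. c \<bullet> v \<le> c \<bullet> z \<and> (c \<bullet> z \<le> c \<bullet> v \<longrightarrow> z = v)"
proof -
  obtain c where c: "c \<in> carrier_vec n" "{v} = {x\<in>P. \<forall>z\<in>P. c \<bullet> x \<le> c \<bullet> z}"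
    using assms unfolding is_vertex_def is_face_def by blast
  have vin: "v \<in> {x\<in>P. \<forall>z\<in>P. c \<bullet> x \<le> c \<bullet> z}" using c(2) by blast
  then show "v \<in> P" by blast
  show "\<exists>c\<in>carrier_vec n. \<forall>z\<in>P. c \<bullet> v \<le> c \<bullet> z \<and> (c \<bullet> z \<le> c \<bullet> v \<longrightarrow> z = v)"
  proof (intro bexI[OF _ c(1)] ballI conjI impI)
    fix z assume z: "z \<in> P"
    show "c \<bullet> v \<le> c \<bullet> z" using vin z by blast
    assume "c \<bullet> z \<le> c \<bullet> v"
    then have "\<forall>z'\<in>P. c \<bullet> z \<le> c \<bullet> z'" using vin by force
    then have "z \<in> {x\<in>P. \<forall>z\<in>P. c \<bullet> x \<le> c \<bullet> z}" using z by blast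
    then show "z = v" using c(2) by blast
  qed
qed

lemma vertex_ker:
  assumes v: "is_vertex n P v" and y: "y \<in> carrier_vec n"
    and tz: "\<forall>j<m. row A j \<bullet> v = b $ j \<longrightarrow> row A j \<bullet> y = 0"
  shows "y = 0\<^sub>v n"
proof -
  note V = vertex_in[OF v]
  obtain c where c: "c \<in> carrier_vec n" "\<forall>z\<in>P. c \<bullet> v \<le> c \<bullet> z \<and> (c \<bullet> z \<le> c \<bullet> v \<longrightarrow> z = v)"
    using V(2) by blast
  have vc: "v \<in> carrier_vec n" using inP_D(1)[OF V(1)] .
  obtain \<tau> where t: "\<tau> > 0" "\<forall>\<sigma>. \<bar>\<sigma>\<bar> \<le> \<tau> \<longrightarrow> vec n (\<lambda>a. v $ a + \<sigma> * y $ a) \<in> P"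
    using small_move[OF V(1) y tz] by blast
  have p: "vec n (\<lambda>a. v $ a + \<tau> * y $ a) \<in> P" using t by auto
  have mm: "vec n (\<lambda>a. v $ a + (-\<tau>) * y $ a) \<in> P" using t(2)[rule_format, of "-\<tau>"] t(1) by simp
  have cp: "c \<bullet> vec n (\<lambda>a. v $ a + \<tau> * y $ a) = c \<bullet> v + \<tau> * (c \<bullet> y)" by (rule sp_lin1[OF c(1) vc y])
  have cm: "c \<bullet> vec n (\<lambda>a. v $ a + (-\<tau>) * y $ a) = c \<bullet> v + (-\<tau>) * (c \<bullet> y)" by (rule sp_lin1[OF c(1) vc y])
  have "c \<bullet> v \<le> c \<bullet> v + \<tau> * (c \<bullet> y)" using c(2) p cp by metis
  moreover have "c \<bullet> v \<le> c \<bullet> v + (-\<tau>) * (c \<bullet> y)" using c(2) mm cm by metis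
  ultimately have "\<tau> * (c \<bullet> y) = 0" by linarith
  then have "c \<bullet> vec n (\<lambda>a. v $ a + \<tau> * y $ a) \<le> c \<bullet> v" unfolding cp by linarith
  then have eqv: "vec n (\<lambda>a. v $ a + \<tau> * y $ a) = v" using c(2) p by blast
  show "y = 0\<^sub>v n"
  proof (rule eq_vecI)
    fix a assume "a < dim_vec (0\<^sub>v n :: real vec)"
    then have a: "a < n" by simp
    have "vec n (\<lambda>a. v $ a + \<tau> * y $ a) $ a = v $ a" using eqv by simp
    then have "\<tau> * y $ a = 0" using a by simp
    then show "y $ a = 0\<^sub>v n $ a" using t(1) a by simp
  qed (use y in simp)
qed

definition mv :: "real mat \<Rightarrow> real vec \<Rightarrow> (nat \<Rightarrow> real) \<Rightarrow> real mat" where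
  "mv X d t = mat n (1+m) (\<lambda>(a,k). X $$ (a,k) + d $ a * t k)"

lemma mv_carrier[simp]: "mv X d t \<in> carrier_mat n (1+m)" unfolding mv_def by simp
lemma mv_dims[simp]: "dim_row (mv X d t) = n" "dim_col (mv X d t) = 1+m" unfolding mv_def by simp_all

lemma mv_col:
  assumes "X \<in> carrier_mat n (1+m)" "k < 1 + m" shows "col (mv X d t) k = vec n (\<lambda>a. col X k $ a + t k * d $ a)"
  using assms unfolding mv_def by (intro eq_vecI) auto

lemma mv_AX:
  assumes X: "X \<in> carrier_mat n (1+m)" and d: "d \<in> carrier_vec n" and j: "j < m" and k: "k < 1+m"
  shows "(A * mv X d t) $$ (j,k) = (A*X) $$ (j,k) + (row A j \<bullet> d) * t k"
proof -
  have "(A * mv X d t) $$ (j,k) = row A j \<bullet> col (mv X d t) k" using j k by simp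
  also have "\<dots> = row A j \<bullet> col X k + t k * (row A j \<bullet> d)"
    unfolding mv_col[OF X k] by (rule sp_lin1[OF rowA[OF j] _ d]) (use X k in auto)
  also have "\<dots> = (A*X) $$ (j,k) + (row A j \<bullet> d) * t k" using X j k by simp
  finally show ?thesis .
qed

lemma AX_col0:
  assumes X: "X \<in> carrier_mat n (1+m)" and j: "j < m"
  shows "(A*X) $$ (j,0) = row A j \<bullet> col X 0" using X j by simp

lemma step:
  assumes X: "X \<in> carrier_mat n (1+m)" "feas X" and d: "d \<in> carrier_vec n"
    and j0: "j0 < m" "row A j0 \<bullet> d < 0"
  shows "\<exists>js t. js < m \<and> row A js \<bullet> d < 0 \<and> lexnn (1+m) t
     \<and> t 0 = ((A*X) $$ (js,0) - b $ js) / (- (row A js \<bullet> d))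
     \<and> (\<forall>j<m. row A j \<bullet> d < 0 \<longrightarrow> t 0 \<le> ((A*X) $$ (j,0) - b $ j) / (- (row A j \<bullet> d)))
     \<and> feas (mv X d t) \<and> tightX (mv X d t) {js}"
proof -
  define B where "B = {j. j < m \<and> row A j \<bullet> d < 0}"
  define r where "r = (\<lambda>j k. ((A*X) $$ (j,k) - bt $$ (j,k)) / (- (row A j \<bullet> d)))"
  have finB: "finite B" unfolding B_def by auto
  have neB: "B \<noteq> {}" using j0 unfolding B_def by auto
  obtain js where js: "js \<in> B" "\<forall>i\<in>B. lexnn (1+m) (\<lambda>k. r i k - r js k)"
    using lexnn_min[OF finB neB, of "1+m" r] by blast
  define t where "t = r js"
  have jsm: "js < m" "row A js \<bullet> d < 0" using js unfolding B_def by auto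
  have rl: "lexnn (1+m) (r j)" if "j \<in> B" for j
  proof -
    have j: "j < m" "row A j \<bullet> d < 0" using that unfolding B_def by auto
    have "lexnn (1+m) (\<lambda>k. (1 / (- (row A j \<bullet> d))) * ((A*X) $$ (j,k) - bt $$ (j,k)))"
      using X(2) j by (intro lexnn_scale) (auto simp: feas_def)
    then show ?thesis unfolding r_def by simp
  qed
  have tl: "lexnn (1+m) t" unfolding t_def using rl[OF js(1)] .
  have bt0: "bt $$ (j,0) = b $ j" if "j < m" for j using bt_index[OF that] by simp
  have t0: "t 0 = ((A*X) $$ (js,0) - b $ js) / (- (row A js \<bullet> d))"
    unfolding t_def r_def using bt0[OF jsm(1)] by simp
  have tmin: "t 0 \<le> ((A*X) $$ (j,0) - b $ j) / (- (row A j \<bullet> d))" if "j < m" "row A j \<bullet> d < 0" for j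
  proof -
    have "j \<in> B" using that unfolding B_def by auto
    then have "lexnn (1+m) (\<lambda>k. r j k - t k)" using js(2) unfolding t_def by auto
    from lexnn_first[OF this] have "r j 0 - t 0 \<ge> 0" by simp
    then show ?thesis unfolding r_def using bt0[OF that(1)] by simp
  qed
  have AX': "(A * mv X d t) $$ (j,k) = (A*X) $$ (j,k) + (row A j \<bullet> d) * t k" if "j < m" "k < 1+m" for j k
    using mv_AX[OF X(1) d that] .
  have feas': "feas (mv X d t)" unfolding feas_def
  proof (intro allI impI)
    fix j assume j: "j < m"
    have fj: "lexnn (1+m) (\<lambda>k. (A*X) $$ (j,k) - bt $$ (j,k))" using X(2) j unfolding feas_def by auto
    show "lexnn (1+m) (\<lambda>k. (A * mv X d t) $$ (j,k) - bt $$ (j,k))"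
    proof (cases "row A j \<bullet> d \<ge> 0")
      case True
      have "lexnn (1+m) (\<lambda>k. ((A*X) $$ (j,k) - bt $$ (j,k)) + (row A j \<bullet> d) * t k)"
        by (rule lexnn_add[OF fj lexnn_scale[OF True tl]])
      then show ?thesis by (rule iffD1[OF lexnn_cong, rotated]) (simp add: AX'[OF j])
    next
      case False
      then have jB: "j \<in> B" using j unfolding B_def by auto
      have "lexnn (1+m) (\<lambda>k. r j k - t k)" using js(2) jB unfolding t_def by auto
      then have "lexnn (1+m) (\<lambda>k. (- (row A j \<bullet> d)) * (r j k - t k))"
        using False by (intro lexnn_scale) auto
      then show ?thesis
      proof (rule iffD1[OF lexnn_cong, rotated])
        fix k assume k: "k < 1+m"
        show "(- (row A j \<bullet> d)) * (r j k - t k) = (A * mv X d t) $$ (j,k) - bt $$ (j,k)"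
          unfolding AX'[OF j k] r_def using False by (simp add: field_simps)
      qed
    qed
  qed
  have tight': "tightX (mv X d t) {js}" unfolding tightX_def
  proof (intro ballI allI impI)
    fix i k assume i: "i \<in> {js}" and k: "k < 1+m"
    then have i': "i = js" by simp
    have "(A * mv X d t) $$ (js,k) = (A*X) $$ (js,k) + (row A js \<bullet> d) * t k" by (rule AX'[OF jsm(1) k])
    also have "\<dots> = bt $$ (js,k)" unfolding t_def r_def using jsm(2) by (simp add: field_simps)
    finally show "(A * mv X d t) $$ (i,k) = bt $$ (i,k)" unfolding i' .
  qed
  show ?thesis using jsm tl t0 tmin feas' tight' by blast
qed

lemma dualb_insert:
  assumes D: "dualb I" and I: "I \<subseteq> {..<m}" and j: "j < m" and d: "d \<in> carrier_vec n"
    and Id: "\<forall>i\<in>I. row A i \<bullet> d = 0" and jd: "row A j \<bullet> d \<noteq> 0"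
  shows "dualb (insert j I)"
  unfolding dualb_def
proof
  fix i assume i: "i \<in> insert j I"
  show "\<exists>D\<in>carrier_vec n. row A i \<bullet> D \<noteq> 0 \<and> (\<forall>i'\<in>insert j I. i' \<noteq> i \<longrightarrow> row A i' \<bullet> D = 0)"
  proof (cases "i = j")
    case True
    then show ?thesis using d Id jd by (intro bexI[OF _ d]) auto
  next
    case False
    then have iI: "i \<in> I" using i by auto
    obtain D where D1: "D \<in> carrier_vec n" "row A i \<bullet> D \<noteq> 0" "\<forall>i'\<in>I. i' \<noteq> i \<longrightarrow> row A i' \<bullet> D = 0"
      using D iI unfolding dualb_def by blast
    define D' where "D' = vec n (\<lambda>a. D $ a + (- (row A j \<bullet> D) / (row A j \<bullet> d)) * d $ a)"
    have rD': "row A i' \<bullet> D' = row A i' \<bullet> D + (- (row A j \<bullet> D) / (row A j \<bullet> d)) * (row A i' \<bullet> d)" if "i' < m" for i'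
      unfolding D'_def by (rule sp_lin1[OF rowA[OF that] D1(1) d])
    show ?thesis
    proof (intro bexI[of _ D'] conjI ballI impI)
      show "D' \<in> carrier_vec n" unfolding D'_def by simp
      have im: "i < m" using iI I by auto
      show "row A i \<bullet> D' \<noteq> 0" using rD'[OF im] Id iI D1(2) by simp
      fix i' assume i': "i' \<in> insert j I" "i' \<noteq> i"
      show "row A i' \<bullet> D' = 0"
      proof (cases "i' = j")
        case True then show ?thesis using rD'[OF j] jd by simp
      next
        case False
        then have "i' \<in> I" using i' by auto
        then show ?thesis using rD'[of i'] I Id D1(3) i'(2) by auto
      qed
    qed
  qed
qed

lemma det_of_dualb:
  assumes I: "I \<subseteq> {..<m}" "card I = n" and D: "dualb I"
  shows "det (SA I) \<noteq> 0"
proof -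
  note F = SA_facts[OF I(1)]
  have "\<forall>i\<in>I. \<exists>D. D \<in> carrier_vec n \<and> row A i \<bullet> D \<noteq> 0 \<and> (\<forall>i'\<in>I. i' \<noteq> i \<longrightarrow> row A i' \<bullet> D = 0)"
    using D unfolding dualb_def by blast
  then obtain Df where Df: "\<forall>i\<in>I. Df i \<in> carrier_vec n \<and> row A i \<bullet> Df i \<noteq> 0 \<and> (\<forall>i'\<in>I. i' \<noteq> i \<longrightarrow> row A i' \<bullet> Df i = 0)"
    by (rule bchoice[elim_format]) blast
  define Dm where "Dm = mat n n (\<lambda>(a,l). Df (pick I l) $ a)"
  have Dm: "Dm \<in> carrier_mat n n" unfolding Dm_def by simp
  have SAc: "SA I \<in> carrier_mat n n" using F(2) I(2) by simp
  have pI: "pick I l \<in> I" if "l < n" for l using F(4) that I(2) by simp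
  have colD: "col Dm l = Df (pick I l)" if "l < n" for l
    unfolding Dm_def using that Df pI[OF that] by (intro eq_vecI) auto
  define M where "M = SA I * Dm"
  have M: "M \<in> carrier_mat n n" unfolding M_def using SAc Dm by simp
  have Me: "M $$ (k,l) = row A (pick I k) \<bullet> Df (pick I l)" if "k < n" "l < n" for k l
    unfolding M_def using that SAc Dm F(3) I(2) colD by simp
  have inj: "pick I k \<noteq> pick I l" if "k < n" "l < n" "k \<noteq> l" for k l
    using pick_bij[OF F(5)] that I(2) unfolding bij_betw_def inj_on_def by auto
  have ut: "upper_triangular M" unfolding upper_triangular_def
  proof (intro allI impI)
    fix k l assume k: "k < dim_row M" and l: "l < k"
    then have kn: "k < n" and ln: "l < n" using M by auto
    show "M $$ (k,l) = 0" unfolding Me[OF kn ln] using Df pI[OF kn] pI[OF ln] inj[OF kn ln] l by auto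
  qed
  have "det M = prod_list (diag_mat M)" by (rule det_upper_triangular[OF ut M])
  also have "\<dots> \<noteq> 0"
  proof -
    have "0 \<notin> set (diag_mat M)" unfolding diag_mat_def using M Me Df pI by auto
    then show ?thesis by (simp add: prod_list_zero_iff)
  qed
  finally have "det M \<noteq> 0" .
  then show ?thesis unfolding M_def det_mult[OF SAc Dm] by simp
qed

lemma finalize:
  assumes X: "X \<in> carrier_mat n (1+m)" "feas X" and I: "I \<subseteq> {..<m}" "card I = n"
    and t: "tightX X I" and D: "dualb I"
  shows "lex_feasible_basis A b I \<and> phi I = col X 0"
proof -
  have d: "det (SA I) \<noteq> 0" by (rule det_of_dualb[OF I D])
  have e: "XI A b I = X" by (rule XI_eq[OF I d X(1) t])
  show ?thesis using lfb_iff I d X e unfolding first_col_def by simp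
qed

end



context lp begin

lemma self_sp_pos:
  assumes d: "d \<in> carrier_vec n" "d \<noteq> 0\<^sub>v n" shows "d \<bullet> d > (0::real)"
proof -
  obtain a where a: "a < n" "d $ a \<noteq> 0"
  proof (rule ccontr)
    assume "\<not> thesis"
    then have "\<forall>a<n. d $ a = 0" using that by blast
    then have "d = 0\<^sub>v n" using d(1) by (intro eq_vecI) auto
    then show False using d(2) by simp
  qed
  have "d \<bullet> d = (\<Sum>i\<in>{0..<n}. d $ i * d $ i)" unfolding scalar_prod_def using d(1) by simp
  also have "\<dots> > 0" using a by (intro sum_pos2[of _ a]) (auto simp: zero_less_mult_iff linorder_neq_iff)
  finally show ?thesis .
qed

lemma tighten:
  assumes x: "x \<in> P"
    and H: "\<And>I. I \<subseteq> {j. j < m \<and> row A j \<bullet> x = b $ j} \<Longrightarrow> card I < N \<Longrightarrow>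
      \<exists>d\<in>carrier_vec n. (\<forall>i\<in>I. row A i \<bullet> d = 0) \<and> (\<exists>j<m. row A j \<bullet> x = b $ j \<and> row A j \<bullet> d \<noteq> 0)"
  shows "\<exists>X I. X \<in> carrier_mat n (1+m) \<and> feas X \<and> col X 0 = x \<and> I \<subseteq> {j. j < m \<and> row A j \<bullet> x = b $ j}
     \<and> card I = N \<and> tightX X I \<and> dualb I"
proof -
  have xc: "x \<in> carrier_vec n" using inP_D(1)[OF x] .
  have main: "\<exists>X I. X \<in> carrier_mat n (1+m) \<and> feas X \<and> col X 0 = x \<and> I \<subseteq> {j. j < m \<and> row A j \<bullet> x = b $ j}
     \<and> card I = k \<and> tightX X I \<and> dualb I" if "k \<le> N" for k
    using that
  proof (induction k)
    case 0
    define X0 where "X0 = mat n (1+m) (\<lambda>(a,k). if k = 0 then x $ a else 0)"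
    have X0: "X0 \<in> carrier_mat n (1+m)" unfolding X0_def by simp
    have c0: "col X0 0 = x" unfolding X0_def using xc by (intro eq_vecI) auto
    have AX0: "(A*X0) $$ (j,k) = (if k = 0 then row A j \<bullet> x else 0)" if "j < m" "k < 1+m" for j k
    proof -
      have "(A*X0) $$ (j,k) = row A j \<bullet> col X0 k" using that X0 by simp
      also have "col X0 k = (if k = 0 then x else 0\<^sub>v n)" unfolding X0_def using that xc
        by (intro eq_vecI) auto
      finally show ?thesis using that by simp
    qed
    have "feas X0" unfolding feas_def
    proof (intro allI impI)
      fix j assume j: "j < m"
      have ge: "row A j \<bullet> x \<ge> b $ j" using inP_D(2)[OF x j] .
      show "lexnn (1+m) (\<lambda>k. (A*X0) $$ (j,k) - bt $$ (j,k))"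
      proof (cases "row A j \<bullet> x = b $ j")
        case False
        then have "(A*X0) $$ (j,0) - bt $$ (j,0) > 0" using AX0[OF j] bt_index[OF j] ge by simp
        then show ?thesis unfolding lexnn_def by (intro disjI2 exI[of _ 0]) auto
      next
        case True
        have z: "(A*X0) $$ (j,i) - bt $$ (j,i) = 0" if "i < j + 1" for i
          using AX0[OF j, of i] bt_index[OF j, of i] that True j by auto
        have p: "(A*X0) $$ (j,j+1) - bt $$ (j,j+1) > 0"
          using AX0[OF j, of "j+1"] bt_index[OF j, of "j+1"] j by auto
        show ?thesis unfolding lexnn_def using z p j by (intro disjI2 exI[of _ "j+1"]) auto
      qed
    qed
    then show ?case using X0 c0 by (intro exI[of _ X0] exI[of _ "{}"]) (auto simp: tightX_def dualb_def)
  next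
    case (Suc k)
    then obtain X I where XI: "X \<in> carrier_mat n (1+m)" "feas X" "col X 0 = x"
      "I \<subseteq> {j. j < m \<and> row A j \<bullet> x = b $ j}" "card I = k" "tightX X I" "dualb I" by auto
    have Im: "I \<subseteq> {..<m}" using XI(4) by auto
    have finI: "finite I" using Im finite_subset by blast
    obtain d j where d: "d \<in> carrier_vec n" "\<forall>i\<in>I. row A i \<bullet> d = 0" and
      j: "j < m" "row A j \<bullet> x = b $ j" "row A j \<bullet> d \<noteq> 0"
      using H[OF XI(4)] XI(5) Suc(2) by force
    define s :: real where "s = (if row A j \<bullet> d < 0 then 1 else -1)"
    define d' where "d' = vec n (\<lambda>a. s * d $ a)"
    have d'c: "d' \<in> carrier_vec n" unfolding d'_def by simp
    have rd': "row A i \<bullet> d' = s * (row A i \<bullet> d)" if "i < m" for i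
      unfolding d'_def by (rule sp_smult[OF rowA[OF that] d(1)])
    have jd': "row A j \<bullet> d' < 0" using rd'[OF j(1)] j(3) unfolding s_def by auto
    obtain js t where st: "js < m" "row A js \<bullet> d' < 0" "lexnn (1+m) t"
       "t 0 = ((A*X) $$ (js,0) - b $ js) / (- (row A js \<bullet> d'))"
       "\<forall>j<m. row A j \<bullet> d' < 0 \<longrightarrow> t 0 \<le> ((A*X) $$ (j,0) - b $ j) / (- (row A j \<bullet> d'))"
       "feas (mv X d' t)" "tightX (mv X d' t) {js}"
      using step[OF XI(1) XI(2) d'c j(1) jd'] by blast
    have AXj: "(A*X) $$ (j,0) = b $ j" using AX_col0[OF XI(1) j(1)] XI(3) j(2) by simp
    have "t 0 \<le> 0" using st(5) j(1) jd' AXj by auto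
    moreover have "t 0 \<ge> 0" using lexnn_first[OF st(3)] by simp
    ultimately have t0: "t 0 = 0" by simp
    define X' where "X' = mv X d' t"
    have X0x: "X $$ (a,0) = x $ a" if "a < n" for a
      using XI(1) XI(3) that by (metis carrier_matD(1) carrier_matD(2) col_def index_vec zero_less_Suc add_0 plus_1_eq_Suc)
    have c': "col X' 0 = x" unfolding X'_def mv_def using t0 X0x xc by (intro eq_vecI) auto
    have jsT: "row A js \<bullet> x = b $ js"
    proof -
      have "(A*X') $$ (js,0) = bt $$ (js,0)" using st(7) unfolding tightX_def X'_def by auto
      then show ?thesis using AX_col0[OF mv_carrier st(1), of X d' t] c' bt_index[OF st(1)] unfolding X'_def by simp
    qed
    have jsI: "js \<notin> I" using st(2) rd' d(2) Im by fastforce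
    have tight': "tightX X' (insert js I)" unfolding tightX_def
    proof (intro ballI allI impI)
      fix i kk assume i: "i \<in> insert js I" and kk: "kk < 1+m"
      show "(A*X') $$ (i,kk) = bt $$ (i,kk)"
      proof (cases "i = js")
        case True then show ?thesis using st(7) kk unfolding tightX_def X'_def by auto
      next
        case False
        then have iI: "i \<in> I" using i by auto
        then have im: "i < m" using Im by auto
        have "(A*X') $$ (i,kk) = (A*X) $$ (i,kk) + (row A i \<bullet> d') * t kk"
          unfolding X'_def by (rule mv_AX[OF XI(1) d'c im kk])
        also have "\<dots> = (A*X) $$ (i,kk)" using rd'[OF im] d(2) iI by simp
        also have "\<dots> = bt $$ (i,kk)" using XI(6) iI kk unfolding tightX_def by auto
        finally show ?thesis .
      qed
    qed
    have dual': "dualb (insert js I)"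
      by (rule dualb_insert[OF XI(7) Im st(1) d'c]) (use rd' d(2) Im st(2) in auto)
    have "card (insert js I) = Suc k" using finI jsI XI(5) by simp
    moreover have "insert js I \<subseteq> {j. j < m \<and> row A j \<bullet> x = b $ j}" using XI(4) st(1) jsT by auto
    ultimately show ?case using tight' dual' c' st(6) unfolding X'_def by (intro exI[of _ "mv X d' t"] exI[of _ "insert js I"]) auto
  qed
  show ?thesis using main[of N] by simp
qed

lemma vertex_lfb:
  assumes v: "is_vertex n P v" shows "\<exists>I. lex_feasible_basis A b I \<and> phi I = v"
proof -
  have vP: "v \<in> P" using vertex_in(1)[OF v] .
  obtain X I where XI: "X \<in> carrier_mat n (1+m)" "feas X" "col X 0 = v" "I \<subseteq> {j. j < m \<and> row A j \<bullet> v = b $ j}"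
     "card I = n" "tightX X I" "dualb I"
  proof (rule tighten[OF vP, of n, THEN exE], goal_cases)
    case (1 I)
    then have Im: "I \<subseteq> {..<m}" by auto
    have fin: "finite I" using Im finite_subset by blast
    have S: "row A ` I \<subseteq> carrier_vec n" "finite (row A ` I)" "card (row A ` I) < n"
      using Im fin 1 card_image_le[OF fin, of "row A"] by auto
    obtain d where d: "d \<in> carrier_vec n" "d \<noteq> 0\<^sub>v n" "\<forall>s\<in>row A ` I. s \<bullet> d = 0"
      using padding[OF S] by blast
    have "\<exists>j<m. row A j \<bullet> v = b $ j \<and> row A j \<bullet> d \<noteq> 0"
    proof (rule ccontr)
      assume "\<not> ?thesis"
      then have "d = 0\<^sub>v n" using vertex_ker[OF v d(1)] by auto
      then show False using d(2) by simp
    qed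
    then show ?case using d by auto
  next
    case (2 X)
    then show ?case using that by blast
  qed
  have Im: "I \<subseteq> {..<m}" using XI(4) by auto
  show ?thesis using finalize[OF XI(1,2) Im XI(5,6,7)] XI(3) by blast
qed

lemma final_move:
  assumes X: "X \<in> carrier_mat n (1+m)" "feas X" and K: "K \<subseteq> {..<m}" "card K = n - 1" "n \<ge> 1"
    and tK: "tightX X K" and dK: "dualb K"
    and z: "z \<in> P" and e: "e \<in> carrier_vec n" and Ke: "\<forall>k\<in>K. row A k \<bullet> e = 0"
    and c0: "\<forall>a<n. X $$ (a,0) = z $ a - (1/2) * e $ a"
    and j0: "j0 < m" "row A j0 \<bullet> z = b $ j0" "row A j0 \<bullet> e < 0"
  shows "\<exists>js. js \<notin> K \<and> js < m \<and> row A js \<bullet> e < 0 \<and> lex_feasible_basis A b (insert js K) \<and> phi (insert js K) = z"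
proof -
  have zc: "z \<in> carrier_vec n" using inP_D(1)[OF z] .
  have col0: "col X 0 = vec n (\<lambda>a. z $ a + (-1/2) * e $ a)" using X c0 by (intro eq_vecI) auto
  have AX0: "(A*X) $$ (j,0) = row A j \<bullet> z - (1/2) * (row A j \<bullet> e)" if "j < m" for j
    using AX_col0[OF X(1) that] sp_lin1[OF rowA[OF that] zc e, of "-1/2"] col0 by simp
  obtain js t where st: "js < m" "row A js \<bullet> e < 0" "lexnn (1+m) t"
       "t 0 = ((A*X) $$ (js,0) - b $ js) / (- (row A js \<bullet> e))"
       "\<forall>j<m. row A j \<bullet> e < 0 \<longrightarrow> t 0 \<le> ((A*X) $$ (j,0) - b $ j) / (- (row A j \<bullet> e))"
       "feas (mv X e t)" "tightX (mv X e t) {js}"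
      using step[OF X e j0(1) j0(3)] by blast
  have "t 0 \<le> ((A*X) $$ (j0,0) - b $ j0) / (- (row A j0 \<bullet> e))" using st(5) j0 by auto
  also have "\<dots> = 1/2" unfolding AX0[OF j0(1)] using j0 by (simp add: field_simps)
  finally have t1: "t 0 \<le> 1/2" .
  have "((A*X) $$ (js,0) - b $ js) / (- (row A js \<bullet> e)) \<ge> 1/2"
  proof -
    have "row A js \<bullet> z \<ge> b $ js" using inP_D(2)[OF z st(1)] .
    then have "(A*X) $$ (js,0) - b $ js \<ge> (1/2) * (- (row A js \<bullet> e))" unfolding AX0[OF st(1)] by simp
    then show ?thesis using st(2) by (simp add: field_simps)
  qed
  then have t0: "t 0 = 1/2" using t1 st(4) by simp
  define X' where "X' = mv X e t"
  have c': "col X' 0 = z" unfolding X'_def mv_def using t0 c0 zc by (intro eq_vecI) auto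
  have jsK: "js \<notin> K" using st(2) Ke by auto
  have tight': "tightX X' (insert js K)" unfolding tightX_def
  proof (intro ballI allI impI)
    fix i kk assume i: "i \<in> insert js K" and kk: "kk < 1+m"
    show "(A*X') $$ (i,kk) = bt $$ (i,kk)"
    proof (cases "i = js")
      case True then show ?thesis using st(7) kk unfolding tightX_def X'_def by auto
    next
      case False
      then have iI: "i \<in> K" using i by auto
      then have im: "i < m" using K by auto
      have "(A*X') $$ (i,kk) = (A*X) $$ (i,kk) + (row A i \<bullet> e) * t kk"
        unfolding X'_def by (rule mv_AX[OF X(1) e im kk])
      also have "\<dots> = (A*X) $$ (i,kk)" using Ke iI by simp
      also have "\<dots> = bt $$ (i,kk)" using tK iI kk unfolding tightX_def by auto
      finally show ?thesis .
    qed
  qed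
  have dual': "dualb (insert js K)"
    by (rule dualb_insert[OF dK K(1) st(1) e]) (use Ke st(2) in auto)
  have finK: "finite K" using K(1) finite_subset by blast
  have card': "card (insert js K) = n" using finK jsK K by simp
  have Km': "insert js K \<subseteq> {..<m}" using K(1) st(1) by auto
  have "lex_feasible_basis A b (insert js K) \<and> phi (insert js K) = col X' 0"
    by (rule finalize[OF _ _ Km' card' tight' dual']) (use st(6) in \<open>auto simp: X'_def\<close>)
  then show ?thesis using c' jsK st(1,2) by auto
qed

end



context lp begin

lemma adj_lfb:
  assumes adj: "adjacent n P v w"
  shows "\<exists>I I'. lex_feasible_basis A b I \<and> lex_feasible_basis A b I' \<and> card (I \<inter> I') = n - 1 \<and> phi I = v \<and> phi I' = w"
proof -
  have vv: "is_vertex n P v" and ww: "is_vertex n P w" and vw: "v \<noteq> w"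
    and face: "is_face n P (closed_segment_vec v w)" using adj unfolding adjacent_def by auto
  obtain c where c: "c \<in> carrier_vec n" "closed_segment_vec v w = {x\<in>P. \<forall>y\<in>P. c \<bullet> x \<le> c \<bullet> y}"
    using face unfolding is_face_def by blast
  have vP: "v \<in> P" using vertex_in(1)[OF vv] .
  have wP: "w \<in> P" using vertex_in(1)[OF ww] .
  have vc: "v \<in> carrier_vec n" using inP_D(1)[OF vP] .
  have wc: "w \<in> carrier_vec n" using inP_D(1)[OF wP] .
  have n1: "n \<ge> 1"
  proof (rule ccontr)
    assume "\<not> n \<ge> 1" then have "n = 0" by auto
    then have "v = w" using vc wc by (intro eq_vecI) auto
    then show False using vw by simp
  qed
  define d where "d = vec n (\<lambda>a. w $ a + (-1) * v $ a)"
  have dc: "d \<in> carrier_vec n" unfolding d_def by simp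
  have rd: "u \<bullet> d = u \<bullet> w - u \<bullet> v" if "u \<in> carrier_vec n" for u
    using sp_lin1[OF that wc vc, of "-1"] unfolding d_def by simp
  have dnz: "d \<noteq> 0\<^sub>v n"
  proof
    assume "d = 0\<^sub>v n"
    then have "w = v" using vec_eq_by_diff[OF wc vc] unfolding d_def by simp
    then show False using vw by simp
  qed
  define mp where "mp = vec n (\<lambda>a. (1 - 1/2) * v $ a + (1/2) * w $ a)"
  have "mp = (1 - 1/2) \<cdot>\<^sub>v v + (1/2) \<cdot>\<^sub>v w" unfolding mp_def using seg_vec[OF vc wc, of "1/2"] by simp
  then have "mp \<in> closed_segment_vec v w" unfolding closed_segment_vec_def mem_Collect_eq
    by (intro exI[of _ "1/2"]) simp
  then have mpP: "mp \<in> P" and mpmin: "\<forall>y\<in>P. c \<bullet> mp \<le> c \<bullet> y" using c(2) by auto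
  have rmp: "row A j \<bullet> mp = (1/2) * (row A j \<bullet> v) + (1/2) * (row A j \<bullet> w)" if "j < m" for j
    unfolding mp_def using sp_lin[OF rowA[OF that] vc wc, of "1 - 1/2" "1/2"] by simp
  have Et: "row A j \<bullet> v = b $ j \<and> row A j \<bullet> w = b $ j" if "j < m" "row A j \<bullet> mp = b $ j" for j
    using rmp[OF that(1)] that(2) inP_D(2)[OF vP that(1)] inP_D(2)[OF wP that(1)] by linarith
  have KC: "\<exists>\<mu>. \<forall>a<n. y $ a = \<mu> * d $ a"
    if y: "y \<in> carrier_vec n" and tz: "\<forall>j<m. row A j \<bullet> mp = b $ j \<longrightarrow> row A j \<bullet> y = 0" for y
  proof -
    have mpc: "mp \<in> carrier_vec n" unfolding mp_def by simp
    obtain \<tau> where t: "\<tau> > 0" "\<forall>\<sigma>. \<bar>\<sigma>\<bar> \<le> \<tau> \<longrightarrow> vec n (\<lambda>a. mp $ a + \<sigma> * y $ a) \<in> P"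
      using small_move[OF mpP y tz] by blast
    have p: "vec n (\<lambda>a. mp $ a + \<tau> * y $ a) \<in> P" using t by auto
    have mm: "vec n (\<lambda>a. mp $ a + (-\<tau>) * y $ a) \<in> P" using t(2)[rule_format, of "-\<tau>"] t(1) by simp
    have cp: "c \<bullet> vec n (\<lambda>a. mp $ a + \<tau> * y $ a) = c \<bullet> mp + \<tau> * (c \<bullet> y)" by (rule sp_lin1[OF c(1) mpc y])
    have cm: "c \<bullet> vec n (\<lambda>a. mp $ a + (-\<tau>) * y $ a) = c \<bullet> mp + (-\<tau>) * (c \<bullet> y)" by (rule sp_lin1[OF c(1) mpc y])
    have "c \<bullet> mp \<le> c \<bullet> mp + \<tau> * (c \<bullet> y)" using mpmin p cp by metis
    moreover have "c \<bullet> mp \<le> c \<bullet> mp + (-\<tau>) * (c \<bullet> y)" using mpmin mm cm by metis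
    ultimately have "\<tau> * (c \<bullet> y) = 0" by linarith
    then have "c \<bullet> vec n (\<lambda>a. mp $ a + \<tau> * y $ a) = c \<bullet> mp" unfolding cp by linarith
    then have "\<forall>z\<in>P. c \<bullet> vec n (\<lambda>a. mp $ a + \<tau> * y $ a) \<le> c \<bullet> z" using mpmin by simp
    then have "vec n (\<lambda>a. mp $ a + \<tau> * y $ a) \<in> closed_segment_vec v w" using c(2) p by blast
    then obtain s where s: "vec n (\<lambda>a. mp $ a + \<tau> * y $ a) = (1 - s) \<cdot>\<^sub>v v + s \<cdot>\<^sub>v w"
      unfolding closed_segment_vec_def by blast
    have "y $ a = ((s - 1/2) / \<tau>) * d $ a" if a: "a < n" for a
    proof -
      have "vec n (\<lambda>a. mp $ a + \<tau> * y $ a) $ a = ((1 - s) \<cdot>\<^sub>v v + s \<cdot>\<^sub>v w) $ a" using s by simp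
      then have "mp $ a + \<tau> * y $ a = (1 - s) * v $ a + s * w $ a" using a vc wc by simp
      then have "(v $ a + w $ a) / 2 + \<tau> * y $ a = (1 - s) * v $ a + s * w $ a" unfolding mp_def using a by (simp add: add_divide_distrib)
      then show ?thesis unfolding d_def using a t(1) by (simp add: field_simps)
    qed
    then show ?thesis by blast
  qed
  let ?E = "{j. j < m \<and> row A j \<bullet> mp = b $ j}"
  obtain X K where XK: "X \<in> carrier_mat n (1+m)" "feas X" "col X 0 = mp" "K \<subseteq> ?E"
     "card K = n - 1" "tightX X K" "dualb K"
  proof (rule tighten[OF mpP, of "n - 1", THEN exE], goal_cases)
    case (1 I)
    then have Im: "I \<subseteq> {..<m}" by auto
    have fin: "finite I" using Im finite_subset by blast
    have "card (insert d (row A ` I)) \<le> Suc (card (row A ` I))" using fin by (simp add: card_insert_if)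
    also have "\<dots> \<le> Suc (card I)" using card_image_le[OF fin, of "row A"] by simp
    also have "\<dots> < n" using 1 by auto
    finally have S: "insert d (row A ` I) \<subseteq> carrier_vec n" "finite (insert d (row A ` I))"
      "card (insert d (row A ` I)) < n" using Im fin dc by auto
    obtain d' where d': "d' \<in> carrier_vec n" "d' \<noteq> 0\<^sub>v n" "\<forall>s\<in>insert d (row A ` I). s \<bullet> d' = 0"
      using padding[OF S] by blast
    have "\<exists>j<m. row A j \<bullet> mp = b $ j \<and> row A j \<bullet> d' \<noteq> 0"
    proof (rule ccontr)
      assume "\<not> ?thesis"
      then obtain \<mu> where mu: "\<forall>a<n. d' $ a = \<mu> * d $ a" using KC[OF d'(1)] by auto
      have "d' = vec n (\<lambda>a. \<mu> * d $ a)" using d'(1) mu by (intro eq_vecI) auto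
      then have "d \<bullet> d' = \<mu> * (d \<bullet> d)" using sp_smult[OF dc dc, of \<mu>] by simp
      moreover have "d \<bullet> d' = 0" using d'(3) by simp
      moreover have "d \<bullet> d > 0" by (rule self_sp_pos[OF dc dnz])
      ultimately have "\<mu> = 0" by simp
      then have "d' = 0\<^sub>v n" using d'(1) mu by (intro eq_vecI) auto
      then show False using d'(2) by simp
    qed
    then show ?case using d' by auto
  next
    case (2 X)
    then show ?case using that by blast
  qed
  have Km: "K \<subseteq> {..<m}" using XK(4) by auto
  have Kd: "\<forall>k\<in>K. row A k \<bullet> d = 0"
  proof
    fix k assume "k \<in> K" then have k: "k < m" "row A k \<bullet> mp = b $ k" using XK(4) by auto
    show "row A k \<bullet> d = 0" using Et[OF k] rd[OF rowA[OF k(1)]] by simp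
  qed
  have X0: "X $$ (a,0) = mp $ a" if "a < n" for a
  proof -
    have "col X 0 $ a = X $$ (a,0)" using XK(1) that by simp
    then show ?thesis using XK(3) by simp
  qed
  obtain j1 where j1: "j1 < m" "row A j1 \<bullet> v = b $ j1" "row A j1 \<bullet> d > 0"
  proof -
    have "\<exists>j<m. row A j \<bullet> v = b $ j \<and> row A j \<bullet> d \<noteq> 0"
    proof (rule ccontr)
      assume "\<not> ?thesis"
      then have "d = 0\<^sub>v n" using vertex_ker[OF vv dc] by auto
      then show False using dnz by simp
    qed
    then obtain j where j: "j < m" "row A j \<bullet> v = b $ j" "row A j \<bullet> d \<noteq> 0" by blast
    have "row A j \<bullet> d \<ge> 0" using rd[OF rowA[OF j(1)]] j(2) inP_D(2)[OF wP j(1)] by simp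
    then show ?thesis using that j by simp
  qed
  obtain j2 where j2: "j2 < m" "row A j2 \<bullet> w = b $ j2" "row A j2 \<bullet> d < 0"
  proof -
    have "\<exists>j<m. row A j \<bullet> w = b $ j \<and> row A j \<bullet> d \<noteq> 0"
    proof (rule ccontr)
      assume "\<not> ?thesis"
      then have "d = 0\<^sub>v n" using vertex_ker[OF ww dc] by auto
      then show False using dnz by simp
    qed
    then obtain j where j: "j < m" "row A j \<bullet> w = b $ j" "row A j \<bullet> d \<noteq> 0" by blast
    have "row A j \<bullet> d \<le> 0" using rd[OF rowA[OF j(1)]] j(2) inP_D(2)[OF vP j(1)] by simp
    then show ?thesis using that j by simp
  qed
  define dv where "dv = vec n (\<lambda>a. (-1) * d $ a)"
  have dvc: "dv \<in> carrier_vec n" unfolding dv_def by simp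
  have rdv: "row A j \<bullet> dv = - (row A j \<bullet> d)" if "j < m" for j
    unfolding dv_def using sp_smult[OF rowA[OF that] dc, of "-1"] by simp
  have Ke1: "\<forall>k\<in>K. row A k \<bullet> dv = 0" using Kd rdv Km by auto
  have c01: "\<forall>a<n. X $$ (a,0) = v $ a - (1/2) * dv $ a" using X0 unfolding mp_def dv_def d_def by (auto simp: field_simps)
  have j1dv: "row A j1 \<bullet> dv < 0" using j1 rdv[OF j1(1)] by auto
  obtain js1 where js1: "js1 \<notin> K" "js1 < m" "row A js1 \<bullet> dv < 0"
     "lex_feasible_basis A b (insert js1 K)" "phi (insert js1 K) = v"
    using final_move[OF XK(1,2) Km XK(5) n1 XK(6,7) vP dvc Ke1 c01 j1(1) j1(2) j1dv] by blast
  have c02: "\<forall>a<n. X $$ (a,0) = w $ a - (1/2) * d $ a" using X0 unfolding mp_def d_def by (auto simp: field_simps)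
  obtain js2 where js2: "js2 \<notin> K" "js2 < m" "row A js2 \<bullet> d < 0"
     "lex_feasible_basis A b (insert js2 K)" "phi (insert js2 K) = w"
    using final_move[OF XK(1,2) Km XK(5) n1 XK(6,7) wP dc Kd c02 j2(1) j2(2) j2(3)] by blast
  have ne: "js1 \<noteq> js2" using js1(3) js2(3) rdv[OF js1(2)] by auto
  have "insert js1 K \<inter> insert js2 K = K" using ne js1(1) js2(1) by auto
  then have "card (insert js1 K \<inter> insert js2 K) = n - 1" using XK(5) by simp
  then show ?thesis using js1 js2 by blast
qed

end

theorem theorem3p8:
  fixes A :: "real mat" and b :: "real vec" and m n :: nat
  assumes "A \<in> carrier_mat m n" and "b \<in> carrier_vec m"
    and "is_polytope n (polyhedron A b)"
  shows "G_vert n (polyhedron A b) = graph_image (\<lambda>I. first_col (XI A b I)) (G_lex A b)"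
proof -
  interpret lp A b m n using assms(1,2) by unfold_locales
  have V: "{v. is_vertex n P v} = (\<lambda>I. first_col (XI A b I)) ` {I. lex_feasible_basis A b I}"
  proof (intro equalityI subsetI)
    fix v assume "v \<in> {v. is_vertex n P v}"
    then obtain I where "lex_feasible_basis A b I" "phi I = v" using vertex_lfb by blast
    then show "v \<in> (\<lambda>I. first_col (XI A b I)) ` {I. lex_feasible_basis A b I}" by force
  next
    fix v assume "v \<in> (\<lambda>I. first_col (XI A b I)) ` {I. lex_feasible_basis A b I}"
    then show "v \<in> {v. is_vertex n P v}" using lfb_vertex by blast
  qed
  have E: "{(v, w). adjacent n P v w} =
    {((\<lambda>I. first_col (XI A b I)) I, (\<lambda>I. first_col (XI A b I)) I') | I I'.
       (I, I') \<in> {(I, I'). lex_feasible_basis A b I \<and> lex_feasible_basis A b I' \<and> card (I \<inter> I') = dim_col A - 1}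
       \<and> (\<lambda>I. first_col (XI A b I)) I \<noteq> (\<lambda>I. first_col (XI A b I)) I'}"
  proof (intro equalityI subsetI)
    fix p assume "p \<in> {(v, w). adjacent n P v w}"
    then obtain v w where p: "p = (v,w)" "adjacent n P v w" by blast
    then have vw: "v \<noteq> w" unfolding adjacent_def by blast
    obtain I I' where "lex_feasible_basis A b I" "lex_feasible_basis A b I'" "card (I \<inter> I') = n - 1"
      "phi I = v" "phi I' = w" using adj_lfb[OF p(2)] by blast
    then show "p \<in> {((\<lambda>I. first_col (XI A b I)) I, (\<lambda>I. first_col (XI A b I)) I') | I I'.
       (I, I') \<in> {(I, I'). lex_feasible_basis A b I \<and> lex_feasible_basis A b I' \<and> card (I \<inter> I') = dim_col A - 1}
       \<and> (\<lambda>I. first_col (XI A b I)) I \<noteq> (\<lambda>I. first_col (XI A b I)) I'}"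
      using p(1) vw by auto
  next
    fix p assume "p \<in> {((\<lambda>I. first_col (XI A b I)) I, (\<lambda>I. first_col (XI A b I)) I') | I I'.
       (I, I') \<in> {(I, I'). lex_feasible_basis A b I \<and> lex_feasible_basis A b I' \<and> card (I \<inter> I') = dim_col A - 1}
       \<and> (\<lambda>I. first_col (XI A b I)) I \<noteq> (\<lambda>I. first_col (XI A b I)) I'}"
    then obtain I I' where p: "p = (phi I, phi I')" "lex_feasible_basis A b I" "lex_feasible_basis A b I'"
      "card (I \<inter> I') = n - 1" "phi I \<noteq> phi I'" by auto
    then show "p \<in> {(v, w). adjacent n P v w}" using lfb_adj[OF p(2,3,4,5)] by simp
  qed
  show ?thesis unfolding G_vert_def graph_image_def G_lex_def fst_conv snd_conv
    using V E by simp
qed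


end
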